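(* Let $n\ge 1$ and $d\ge 2$ be integers, and let $\Upsilon$ be the normalized Choi state of an $n$-step (not necessarily time-ordered) process matrix, i.e. a density operator on $\mathcal{H}_{\mathrm{i}_0}\otimes\mathcal{H}_{\mathrm{o}_1}\otimes\mathcal{H}_{\mathrm{i}_1}\otimes\mathcal{H}_{\mathrm{o}_2}\otimes\cdots\otimes\mathcal{H}_{\mathrm{i}_{n-1}}\otimes\mathcal{H}_{\mathrm{o}_n}$, where every factor has dimension $d$. For $1\le j\le n$ let $\mathrm{M}_j$ and $\mathrm{N}$ be as defined in the context, and let $\overline{\mathrm{M}_j}=2\ln d-\mathrm{M}_j$. Then for every $1\le k\le n$, $$\mathrm{N}\le 2\sum_{j\ne k}\overline{\mathrm{M}_j}.$$
   Context: Entropies are von Neumann entropies with the natural logarithm, $S(\rho)=-\mathrm{tr}[\rho\ln\rho]$. For a subset $X$ of the tensor factors, $S_X$ denotes the entropy of the reduced state of $\Upsilon$ on $X$ (obtained by tracing out all other factors). Write $S_{\mathrm{i}_{j-1}}$, $S_{\mathrm{o}_j}$ for the single-factor marginal entropies, $S_j$ for the entropy of the marginal on the pair $\mathrm{i}_{j-1}\mathrm{o}_j$, and $S_{1:n}=S(\Upsilon)$. The Markovian correlation of the $j$-th step is $\mathrm{M}_j=S_{\mathrm{i}_{j-1}}+S_{\mathrm{o}_j}-S_j$ (the mutual information between $\mathrm{i}_{j-1}$ and $\mathrm{o}_j$), and the non-Markovian correlation is $\mathrm{N}=\sum_{j=1}^n S_j - S_{1:n}$ (the multipartite mutual information $\mathrm{I}(\mathrm{i}_0\mathrm{o}_1:\mathrm{i}_1\mathrm{o}_2:\cdots:\mathrm{i}_{n-1}\mathrm{o}_n)$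 of $\Upsilon$). No time-ordering trace conditions are imposed on $\Upsilon$ here. *)

theory Defs
  imports "Jordan_Normal_Form.Char_Poly"
begin

text \<open>A system of m tensor factors, each of dimension d, is
  modelled as a complex matrix of dimension d^m. A basis index a < d^m encodes the
  configuration whose k-th factor has value (a div d^k) mod d.
  For the process: factor 2*(j-1) is i_(j-1) and factor 2*j-1 is o_j (j = 1..n).\<close>

definition density_op :: "nat \<Rightarrow> complex mat \<Rightarrow> bool" where
  "density_op D \<rho> \<longleftrightarrow> \<rho> \<in> carrier_mat D D
     \<and> (\<forall>i<D. \<forall>j<D. \<rho> $$ (j, i) = cnj (\<rho> $$ (i, j)))
     \<and> (\<forall>v :: nat \<Rightarrow> complex. Re (\<Sum>i<D. \<Sum>j<D. cnj (v i) * \<rho> $$ (i, j) * v j) \<ge> 0)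
     \<and> (\<Sum>i<D. \<rho> $$ (i, i)) = 1"

text \<open>Eigenvalues with multiplicity (roots of the characteristic polynomial) and
  von Neumann entropy with natural log, S = - tr(rho ln rho) = - sum lambda ln lambda
  (note 0 * ln 0 = 0 in Isabelle).\<close>

definition eigvals_list :: "complex mat \<Rightarrow> complex list" where
  "eigvals_list A = (SOME es. char_poly A = (\<Prod>a\<leftarrow>es. [:- a, 1:]))"

definition vn_entropy :: "complex mat \<Rightarrow> real" where
  "vn_entropy A = - (\<Sum>e\<leftarrow>eigvals_list A. Re e * ln (Re e))"

text \<open>Embedding of an index over the factors listed in xs (digit i of a goes to factor xs!i).\<close>
definition place :: "nat \<Rightarrow> nat list \<Rightarrow> nat \<Rightarrow> nat" where
  "place d xs a = (\<Sum>i<length xs. (a div d ^ i mod d) * d ^ (xs ! i))"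

definition ptrace :: "nat \<Rightarrow> nat \<Rightarrow> nat set \<Rightarrow> complex mat \<Rightarrow> complex mat" where
  "ptrace d m X \<rho> =
     (let xs = sorted_list_of_set X; ys = sorted_list_of_set ({0..<m} - X) in
      mat (d ^ card X) (d ^ card X)
        (\<lambda>(a, b). \<Sum>c<d ^ (m - card X). \<rho> $$ (place d xs a + place d ys c, place d xs b + place d ys c)))"

definition marg_entropy :: "nat \<Rightarrow> nat \<Rightarrow> nat set \<Rightarrow> complex mat \<Rightarrow> real" where
  "marg_entropy d m X \<rho> = vn_entropy (ptrace d m X \<rho>)"

definition S_step :: "nat \<Rightarrow> nat \<Rightarrow> complex mat \<Rightarrow> nat \<Rightarrow> real" where
  "S_step d n \<rho> j = marg_entropy d (2 * n) {2 * j - 2, 2 * j - 1} \<rho>"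

definition markov_corr :: "nat \<Rightarrow> nat \<Rightarrow> complex mat \<Rightarrow> nat \<Rightarrow> real" where
  "markov_corr d n \<rho> j = marg_entropy d (2 * n) {2 * j - 2} \<rho> + marg_entropy d (2 * n) {2 * j - 1} \<rho>
     - S_step d n \<rho> j"

definition nonmarkov_corr :: "nat \<Rightarrow> nat \<Rightarrow> complex mat \<Rightarrow> real" where
  "nonmarkov_corr d n \<rho> = (\<Sum>j = 1..n. S_step d n \<rho> j) - vn_entropy \<rho>"

end

theory Submission
  imports Defs "Jordan_Normal_Form.Schur_Decomposition"
begin

definition adj :: "complex mat \<Rightarrow> complex mat" where
  "adj A = mat (dim_col A) (dim_row A) (\<lambda>(i,j). cnj (A $$ (j,i)))"

definition unitary :: "nat \<Rightarrow> complex mat \<Rightarrow> bool" where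
  "unitary n U \<longleftrightarrow> U \<in> carrier_mat n n \<and> adj U * U = 1\<^sub>m n \<and> U * adj U = 1\<^sub>m n"

definition hermitian :: "nat \<Rightarrow> complex mat \<Rightarrow> bool" where
  "hermitian n A \<longleftrightarrow> A \<in> carrier_mat n n \<and> (\<forall>i<n. \<forall>j<n. A $$ (j,i) = cnj (A $$ (i,j)))"

definition dmat :: "nat \<Rightarrow> (nat \<Rightarrow> real) \<Rightarrow> complex mat" where
  "dmat n l = mat n n (\<lambda>(i,j). if i = j then complex_of_real (l i) else 0)"

lemma mult_index: assumes "A \<in> carrier_mat n m" "B \<in> carrier_mat m k" "i < n" "j < k"
  shows "(A * B) $$ (i,j) = (\<Sum>l<m. A $$ (i,l) * B $$ (l,j))"
  using assms by (simp add: index_mult_mat scalar_prod_def atLeast0LessThan)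

lemma adj_carrier[simp]: "A \<in> carrier_mat n m \<Longrightarrow> adj A \<in> carrier_mat m n"
  unfolding adj_def by auto

lemma adj_dims[simp]: "dim_row (adj A) = dim_col A" "dim_col (adj A) = dim_row A"
  unfolding adj_def by auto

lemma adj_index[simp]: "i < dim_col A \<Longrightarrow> j < dim_row A \<Longrightarrow> adj A $$ (i,j) = cnj (A $$ (j,i))"
  unfolding adj_def by auto

lemma adjmult_index: assumes "A \<in> carrier_mat n m" "B \<in> carrier_mat n k" "i < m" "j < k"
  shows "(adj A * B) $$ (i,j) = (\<Sum>l<n. cnj (A $$ (l,i)) * B $$ (l,j))"
proof -
  have "(adj A * B) $$ (i,j) = (\<Sum>l<n. adj A $$ (i,l) * B $$ (l,j))"
    by (rule mult_index[of _ m n _ k], insert assms, auto)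
  also have "\<dots> = (\<Sum>l<n. cnj (A $$ (l,i)) * B $$ (l,j))"
    by (rule sum.cong, insert assms, auto)
  finally show ?thesis .
qed

lemma multadj_index: assumes "A \<in> carrier_mat n m" "B \<in> carrier_mat k m" "i < n" "j < k"
  shows "(A * adj B) $$ (i,j) = (\<Sum>l<m. A $$ (i,l) * cnj (B $$ (j,l)))"
proof -
  have "(A * adj B) $$ (i,j) = (\<Sum>l<m. A $$ (i,l) * adj B $$ (l,j))"
    by (rule mult_index[of _ n m _ k], insert assms, auto)
  also have "\<dots> = (\<Sum>l<m. A $$ (i,l) * cnj (B $$ (j,l)))"
    by (rule sum.cong, insert assms, auto)
  finally show ?thesis .
qed

lemma adj_adj[simp]: "adj (adj A) = A"
  by (rule eq_matI, auto)

lemma adj_mult: assumes "A \<in> carrier_mat n m" "B \<in> carrier_mat m k"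
  shows "adj (A * B) = adj B * adj A"
proof (rule eq_matI)
  fix i j assume ij: "i < dim_row (adj B * adj A)" "j < dim_col (adj B * adj A)"
  then have i: "i < k" and j: "j < n" using assms by auto
  have "adj (A * B) $$ (i,j) = cnj ((A*B) $$ (j,i))" using i j assms by auto
  also have "\<dots> = cnj (\<Sum>l<m. A $$ (j,l) * B $$ (l,i))"
    using i j assms by (simp add: index_mult_mat scalar_prod_def atLeast0LessThan)
  also have "\<dots> = (\<Sum>l<m. cnj (A $$ (j,l)) * cnj (B $$ (l,i)))"
    by simp
  also have "\<dots> = (\<Sum>l<m. cnj (B $$ (l,i)) * cnj (A $$ (j,l)))"
    by (rule sum.cong, simp, rule mult.commute)
  also have "\<dots> = (adj B * adj A) $$ (i,j)"
    using i j assms by (simp add: index_mult_mat scalar_prod_def atLeast0LessThan)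
  finally show "adj (A * B) $$ (i, j) = (adj B * adj A) $$ (i, j)" .
qed (insert assms, auto)

lemma hermitian_adj: assumes "hermitian n A" shows "adj A = A"
proof (rule eq_matI)
  fix i j assume "i < dim_row A" "j < dim_col A"
  with assms show "adj A $$ (i, j) = A $$ (i, j)" unfolding hermitian_def
    by (metis adj_index carrier_matD(1) carrier_matD(2))
qed (insert assms, auto simp: hermitian_def)

lemma adj_hermitian: "A \<in> carrier_mat n n \<Longrightarrow> adj A = A \<Longrightarrow> hermitian n A"
  unfolding hermitian_def by (metis adj_index carrier_matD(1) carrier_matD(2) complex_cnj_cnj)

lemma unitary_mult: assumes "unitary n U" "unitary n V" shows "unitary n (U * V)"
proof -
  have U: "U \<in> carrier_mat n n" "adj U * U = 1\<^sub>m n" "U * adj U = 1\<^sub>m n"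
    and V: "V \<in> carrier_mat n n" "adj V * V = 1\<^sub>m n" "V * adj V = 1\<^sub>m n"
    using assms unfolding unitary_def by auto
  have aU: "adj U \<in> carrier_mat n n" and aV: "adj V \<in> carrier_mat n n" using U V by auto
  have "adj (U * V) * (U * V) = adj V * adj U * (U * V)"
    using U V by (simp add: adj_mult)
  also have "\<dots> = adj V * (adj U * (U * V))"
    using U V aU aV by (intro assoc_mult_mat, auto)
  also have "adj U * (U * V) = (adj U * U) * V"
    using U V aU aV by (intro assoc_mult_mat[symmetric], auto)
  also have "adj V * (adj U * U * V) = 1\<^sub>m n" using U V aV by simp
  finally have 1: "adj (U * V) * (U * V) = 1\<^sub>m n" .
  have "(U * V) * adj (U * V) = (U * V) * (adj V * adj U)"
    using U V by (simp add: adj_mult)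
  also have "\<dots> = U * (V * (adj V * adj U))"
    using U V aU aV by (intro assoc_mult_mat, auto)
  also have "V * (adj V * adj U) = (V * adj V) * adj U"
    using U V aU aV by (intro assoc_mult_mat[symmetric], auto)
  also have "U * (V * adj V * adj U) = 1\<^sub>m n" using U V aU by simp
  finally have 2: "(U * V) * adj (U * V) = 1\<^sub>m n" .
  show ?thesis unfolding unitary_def using 1 2 U V by auto
qed

lemma dmat_carrier[simp]: "dmat n l \<in> carrier_mat n n" unfolding dmat_def by auto

lemma UDU_index: assumes U: "U \<in> carrier_mat n n" and i: "i < n" and j: "j < n"
  shows "(U * dmat n l * adj U) $$ (i,j) = (\<Sum>k<n. U $$ (i,k) * l k * cnj (U $$ (j,k)))"
proof -
  have UD: "U * dmat n l \<in> carrier_mat n n" using U by auto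
  have "(U * dmat n l * adj U) $$ (i,j) = (\<Sum>k<n. (U * dmat n l) $$ (i,k) * adj U $$ (k,j))"
    by (rule mult_index[OF UD _ i j], insert U, auto)
  also have "\<dots> = (\<Sum>k<n. (\<Sum>r<n. U $$ (i,r) * dmat n l $$ (r,k)) * cnj (U $$ (j,k)))"
    using U i j by (intro sum.cong refl, subst mult_index[OF U dmat_carrier], auto)
  also have "\<dots> = (\<Sum>k<n. (\<Sum>r<n. U $$ (i,r) * (if r = k then complex_of_real (l r) else 0)) * cnj (U $$ (j,k)))"
    by (intro sum.cong refl, simp add: dmat_def)
  also have "\<dots> = (\<Sum>k<n. U $$ (i,k) * l k * cnj (U $$ (j,k)))"
    by (intro sum.cong refl, simp add: if_distrib cong: if_cong)
  finally show ?thesis .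
qed

lemma mult_cnj_sq: "z * cnj z = complex_of_real ((cmod z)^2)"
  using complex_norm_square[of z] by simp

lemma sum_mult_cnj: "(\<Sum>k\<in>A. f k * cnj (f k)) = complex_of_real (\<Sum>k\<in>A. (cmod (f k))^2)"
  by (simp only: mult_cnj_sq of_real_sum)

lemma cmod_sq_sum_pos:
  fixes w :: "complex vec"
  assumes "w \<bullet>c w \<noteq> 0" "w \<in> carrier_vec n"
  shows "(\<Sum>k<n. (cmod (w $ k))^2) > 0"
proof -
  have "w \<bullet>c w = (\<Sum>k<n. w $ k * cnj (w $ k))"
    using assms by (simp add: scalar_prod_def atLeast0LessThan)
  also have "\<dots> = complex_of_real (\<Sum>k<n. (cmod (w $ k))^2)"
    by (rule sum_mult_cnj)
  finally have "complex_of_real (\<Sum>k<n. (cmod (w $ k))^2) \<noteq> 0" using assms by metis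
  hence "(\<Sum>k<n. (cmod (w $ k))^2) \<noteq> 0" by (simp only: of_real_eq_0_iff) simp
  moreover have "(\<Sum>k<n. (cmod (w $ k))^2) \<ge> 0" by (intro sum_nonneg, auto)
  ultimately show ?thesis by linarith
qed

lemma unitary_completion:
  assumes v: "v \<in> carrier_vec n" and v0: "v \<noteq> 0\<^sub>v n"
  shows "\<exists>W c. unitary n W \<and> col W 0 = c \<cdot>\<^sub>v v"
proof -
  interpret cof_vec_space n "TYPE(complex)" .
  define b where "b = basis_completion v"
  from basis_completion[OF v v0, folded b_def]
  have dist_b: "distinct b" 
    and indep: "\<not> lin_dep (set b)" and b: "set b \<subseteq> carrier_vec n" and hdb: "hd b = v" 
    and len_b: "length b = n" by auto
  have n: "n > 0" using v v0 by (cases n, auto)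
  from hdb len_b n obtain vs where bv: "b = v # vs" by (cases b, auto)
  define ws where "ws = gram_schmidt n b"
  from gram_schmidt_result[OF b dist_b indep ws_def]
  have ws: "set ws \<subseteq> carrier_vec n" "corthogonal ws" "length ws = n" 
    by (auto simp: len_b)
  from gram_schmidt_hd[OF v, of vs, folded bv] have hdws: "hd ws = v" unfolding ws_def .
  have ws0: "ws ! 0 = v" using hdws ws(3) n by (cases ws, auto)
  have wsc: "\<And>j. j < n \<Longrightarrow> ws ! j \<in> carrier_vec n" using ws by auto
  define s where "s j = sqrt (\<Sum>k<n. (cmod (ws ! j $ k))^2)" for j
  have spos: "s j > 0" if j: "j < n" for j
  proof -
    have "ws ! j \<bullet>c ws ! j \<noteq> 0" using corthogonalD[OF ws(2), of j j] j ws(3) by auto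
    from cmod_sq_sum_pos[OF this wsc[OF j]] show ?thesis unfolding s_def by auto
  qed
  define W where "W = mat n n (\<lambda>(k,j). ws ! j $ k / complex_of_real (s j))"
  have W: "W \<in> carrier_mat n n" unfolding W_def by auto
  have sp: "(\<Sum>k<n. cnj (ws ! i $ k) * ws ! j $ k) = ws ! j \<bullet>c ws ! i"
    if "i < n" "j < n" for i j
    using wsc[OF that(1)] wsc[OF that(2)] by (simp add: scalar_prod_def atLeast0LessThan mult.commute)
  have "adj W * W = 1\<^sub>m n"
  proof (rule eq_matI)
    fix i j assume "i < dim_row (1\<^sub>m n)" "j < dim_col (1\<^sub>m n)"
    hence i: "i < n" and j: "j < n" by auto
    have "(adj W * W) $$ (i,j) = (\<Sum>k<n. cnj (W $$ (k,i)) * W $$ (k,j))"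
      using i j W by (subst mult_index[of _ n n _ n], auto)
    also have "\<dots> = (\<Sum>k<n. cnj (ws ! i $ k) * ws ! j $ k) / (complex_of_real (s i) * complex_of_real (s j))"
      unfolding W_def using i j by (simp add: sum_divide_distrib)
    also have "\<dots> = (ws ! j \<bullet>c ws ! i) / (complex_of_real (s i) * complex_of_real (s j))"
      using sp[OF i j] by simp
    also have "\<dots> = 1\<^sub>m n $$ (i,j)"
    proof (cases "i = j")
      case True
      have "ws ! j \<bullet>c ws ! j = (\<Sum>k<n. ws ! j $ k * cnj (ws ! j $ k))"
        using wsc[OF j] by (simp add: scalar_prod_def atLeast0LessThan)
      also have "\<dots> = complex_of_real (\<Sum>k<n. (cmod (ws ! j $ k))^2)"
        by (rule sum_mult_cnj)
      also have "\<dots> = complex_of_real (s j) * complex_of_real (s j)"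
        unfolding s_def by (simp add: sum_nonneg flip: of_real_mult)
      finally show ?thesis using True i spos[OF j] by simp
    next
      case False
      then have "ws ! j \<bullet>c ws ! i = 0" using corthogonalD[OF ws(2), of j i] i j ws(3) by auto
      then show ?thesis using False i j by simp
    qed
    finally show "(adj W * W) $$ (i,j) = 1\<^sub>m n $$ (i,j)" .
  qed (insert W, auto)
  moreover have "W * adj W = 1\<^sub>m n"
    using mat_mult_left_right_inverse[OF adj_carrier[OF W] W \<open>adj W * W = 1\<^sub>m n\<close>] .
  moreover have "col W 0 = (1 / complex_of_real (s 0)) \<cdot>\<^sub>v v"
    using n v unfolding W_def ws0[symmetric] by (intro eq_vecI, auto)
  ultimately show ?thesis using W unfolding unitary_def by blast
qed

definition extQ :: "nat \<Rightarrow> complex mat \<Rightarrow> complex mat" where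
  "extQ m V = mat (Suc m) (Suc m) (\<lambda>(i,j). if i = 0 \<and> j = 0 then 1 else if i = 0 \<or> j = 0 then 0
      else V $$ (i - 1, j - 1))"

lemma extQ_carrier[simp]: "extQ m V \<in> carrier_mat (Suc m) (Suc m)"
  unfolding extQ_def by auto

lemma extQ_unitary: assumes "unitary m V" shows "unitary (Suc m) (extQ m V)"
proof -
  have V: "V \<in> carrier_mat m m" and V1: "adj V * V = 1\<^sub>m m" and V2: "V * adj V = 1\<^sub>m m"
    using assms unfolding unitary_def by auto
  have o1: "(\<Sum>k<m. cnj (V $$ (k,i)) * V $$ (k,j)) = (if i = j then 1 else 0)" if "i < m" "j < m" for i j
  proof -
    have "(adj V * V) $$ (i,j) = (\<Sum>k<m. cnj (V $$ (k,i)) * V $$ (k,j))"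
      using V that by (intro adjmult_index[of _ m m _ m], auto)
    then show ?thesis using V1 that V by auto
  qed
  have o2: "(\<Sum>k<m. V $$ (i,k) * cnj (V $$ (j,k))) = (if i = j then 1 else 0)" if "i < m" "j < m" for i j
  proof -
    have "(V * adj V) $$ (i,j) = (\<Sum>k<m. V $$ (i,k) * cnj (V $$ (j,k)))"
      using V that by (intro multadj_index[of _ m m _ m], auto)
    then show ?thesis using V2 that V by auto
  qed
  let ?Q = "extQ m V"
  have Q: "?Q \<in> carrier_mat (Suc m) (Suc m)" by simp
  have "adj ?Q * ?Q = 1\<^sub>m (Suc m)"
  proof (rule eq_matI)
    fix i j assume "i < dim_row (1\<^sub>m (Suc m))" "j < dim_col (1\<^sub>m (Suc m))"
    hence i: "i < Suc m" and j: "j < Suc m" by auto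
    have "(adj ?Q * ?Q) $$ (i,j) = (\<Sum>k<Suc m. cnj (?Q $$ (k,i)) * ?Q $$ (k,j))"
      using i j Q by (intro adjmult_index[of _ "Suc m" "Suc m" _ "Suc m"], auto)
    also have "\<dots> = cnj (?Q $$ (0,i)) * ?Q $$ (0,j) + (\<Sum>k<m. cnj (?Q $$ (Suc k,i)) * ?Q $$ (Suc k,j))"
      by (rule sum.lessThan_Suc_shift)
    also have "\<dots> = 1\<^sub>m (Suc m) $$ (i,j)"
    proof (cases i)
      case 0 then show ?thesis using j by (cases j, auto simp: extQ_def)
    next
      case (Suc i') note ii = this
      show ?thesis
      proof (cases j)
        case 0 then show ?thesis using ii i by (auto simp: extQ_def)
      next
        case (Suc j')
        then show ?thesis using ii i j o1[of i' j'] by (auto simp: extQ_def)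
      qed
    qed
    finally show "(adj ?Q * ?Q) $$ (i,j) = 1\<^sub>m (Suc m) $$ (i,j)" .
  qed (auto simp: extQ_def)
  moreover have "?Q * adj ?Q = 1\<^sub>m (Suc m)"
    using mat_mult_left_right_inverse[OF adj_carrier[OF Q] Q \<open>adj ?Q * ?Q = 1\<^sub>m (Suc m)\<close>] .
  ultimately show ?thesis unfolding unitary_def by auto
qed

lemma unitary_conj_back: assumes U: "unitary n U" and A: "A \<in> carrier_mat n n"
  shows "U * (adj U * A * U) * adj U = A"
proof -
  have Uc: "U \<in> carrier_mat n n" and aU: "adj U \<in> carrier_mat n n"
    and U1: "adj U * U = 1\<^sub>m n" and U2: "U * adj U = 1\<^sub>m n" using U unfolding unitary_def by auto
  have "U * (adj U * A * U) * adj U = U * (adj U * A * U * adj U)"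
    using Uc aU A by (intro assoc_mult_mat, auto)
  also have "adj U * A * U * adj U = adj U * A * (U * adj U)"
    using Uc aU A by (intro assoc_mult_mat, auto)
  also have "\<dots> = adj U * A" using U2 aU A by auto
  also have "U * (adj U * A) = (U * adj U) * A"
    using Uc aU A by (intro assoc_mult_mat[symmetric], auto)
  finally show ?thesis using U2 A by auto
qed

lemma mult_assoc_UQD: assumes "W \<in> carrier_mat n n" "Q \<in> carrier_mat n n" "D \<in> carrier_mat n n"
  shows "W * (Q * D * adj Q) * adj W = (W * Q) * D * adj (W * Q)"
proof -
  have aQ: "adj Q \<in> carrier_mat n n" and aW: "adj W \<in> carrier_mat n n" using assms by auto
  have "W * (Q * D * adj Q) = W * (Q * D) * adj Q"
    using assms aQ by (intro assoc_mult_mat[symmetric], auto)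
  also have "W * (Q * D) = W * Q * D" using assms by (intro assoc_mult_mat[symmetric], auto)
  finally have "W * (Q * D * adj Q) * adj W = W * Q * D * adj Q * adj W" by simp
  also have "\<dots> = W * Q * D * (adj Q * adj W)"
    using assms aQ aW by (intro assoc_mult_mat, auto)
  also have "adj Q * adj W = adj (W * Q)" using assms by (intro adj_mult[symmetric], auto)
  finally show ?thesis .
qed

theorem spectral:
  assumes "hermitian n A"
  shows "\<exists>U l. unitary n U \<and> A = U * dmat n l * adj U"
  using assms
proof (induction n arbitrary: A)
  case 0
  then have A: "A \<in> carrier_mat 0 0" unfolding hermitian_def by auto
  have "unitary 0 (1\<^sub>m 0)" unfolding unitary_def by (auto intro!: eq_matI)
  moreover have "A = 1\<^sub>m 0 * dmat 0 (\<lambda>_. 0) * adj (1\<^sub>m 0)"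
    using A by (intro eq_matI, auto)
  ultimately show ?case by blast
next
  case (Suc m A)
  let ?n = "Suc m"
  have A: "A \<in> carrier_mat ?n ?n" and herm: "\<And>i j. i < ?n \<Longrightarrow> j < ?n \<Longrightarrow> A $$ (j,i) = cnj (A $$ (i,j))"
    using Suc.prems unfolding hermitian_def by blast+
  obtain es where es: "char_poly A = (\<Prod>a\<leftarrow>es. [:- a, 1:])" "length es = ?n"
    using char_poly_factorized[OF A] by blast
  obtain e es' where ees: "es = e # es'" using es(2) by (cases es, auto)
  have "poly (char_poly A) e = 0" unfolding es(1) ees by simp
  then have ev: "eigenvalue A e" using eigenvalue_root_char_poly[OF A] by simp
  define v where "v = find_eigenvector A e"
  have "eigenvector A v e" unfolding v_def by (rule find_eigenvector[OF A ev])
  then have v: "v \<in> carrier_vec ?n" "v \<noteq> 0\<^sub>v ?n" "A *\<^sub>v v = e \<cdot>\<^sub>v v"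
    unfolding eigenvector_def using A by auto
  obtain W c where W: "unitary ?n W" and colW: "col W 0 = c \<cdot>\<^sub>v v"
    using unitary_completion[OF v(1) v(2)] by blast
  have Wc: "W \<in> carrier_mat ?n ?n" and aWc: "adj W \<in> carrier_mat ?n ?n"
    and W1: "adj W * W = 1\<^sub>m ?n" using W unfolding unitary_def by auto
  have Acol: "A *\<^sub>v col W 0 = e \<cdot>\<^sub>v col W 0"
    unfolding colW using v A by (simp add: mult_mat_vec smult_smult_assoc mult.commute)
  have AW0: "(A * W) $$ (k,0) = e * W $$ (k,0)" if k: "k < ?n" for k
  proof -
    have "(A * W) $$ (k,0) = row A k \<bullet> col W 0" using A Wc k by (simp add: index_mult_mat)
    also have "\<dots> = (A *\<^sub>v col W 0) $ k" using A k by simp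
    also have "\<dots> = e * W $$ (k,0)" unfolding Acol using Wc k by simp
    finally show ?thesis .
  qed
  define A' where "A' = adj W * A * W"
  have A'c: "A' \<in> carrier_mat ?n ?n" unfolding A'_def using A Wc by auto
  have A'col: "A' $$ (i,0) = (if i = 0 then e else 0)" if i: "i < ?n" for i
  proof -
    have "A' = adj W * (A * W)" unfolding A'_def using A Wc aWc by (intro assoc_mult_mat, auto)
    then have "A' $$ (i,0) = (adj W * (A * W)) $$ (i,0)" by simp
    also have "\<dots> = (\<Sum>k<?n. adj W $$ (i,k) * (A * W) $$ (k,0))"
      by (rule mult_index[OF aWc mult_carrier_mat[OF A Wc] i zero_less_Suc])
    also have "\<dots> = (\<Sum>k<?n. e * (adj W $$ (i,k) * W $$ (k,0)))"
      by (rule sum.cong, simp, simp add: AW0)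
    also have "\<dots> = e * (\<Sum>k<?n. adj W $$ (i,k) * W $$ (k,0))"
      by (rule sum_distrib_left[symmetric])
    also have "(\<Sum>k<?n. adj W $$ (i,k) * W $$ (k,0)) = (adj W * W) $$ (i,0)"
      by (rule mult_index[OF aWc Wc i zero_less_Suc, symmetric])
    finally show ?thesis unfolding W1 using i by auto
  qed
  have "adj A' = A'"
  proof -
    have "adj A' = adj W * adj A * adj (adj W)" unfolding A'_def using A Wc aWc
      by (simp add: adj_mult[of _ ?n ?n _ ?n] assoc_mult_mat[of _ ?n ?n _ ?n _ ?n])
    then show ?thesis using hermitian_adj[OF Suc.prems] unfolding A'_def by simp
  qed
  then have herm': "hermitian ?n A'" using adj_hermitian[OF A'c] by simp
  have A'h: "A' $$ (j,i) = cnj (A' $$ (i,j))" if "i < ?n" "j < ?n" for i j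
    using herm' that unfolding hermitian_def by blast
  have e_real: "cnj e = e" using A'h[of 0 0] A'col[of 0] by auto
  have A'row: "A' $$ (0,j) = (if j = 0 then e else 0)" if j: "j < ?n" for j
    using A'h[of j 0] A'col[of j] j e_real by auto
  define A3 where "A3 = mat m m (\<lambda>(i,j). A' $$ (Suc i, Suc j))"
  have "hermitian m A3" unfolding hermitian_def
  proof (intro conjI allI impI)
    fix i j assume "i < m" "j < m"
    then show "A3 $$ (j, i) = cnj (A3 $$ (i, j))" unfolding A3_def using A'h[of "Suc i" "Suc j"] by simp
  qed (simp add: A3_def)
  from Suc.IH[OF this] obtain V l3 where V: "unitary m V" and A3: "A3 = V * dmat m l3 * adj V" by blast
  have Vc: "V \<in> carrier_mat m m" using V unfolding unitary_def by auto
  define Q where "Q = extQ m V"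
  define l where "l i = (if i = 0 then Re e else l3 (i - 1))" for i
  have Q: "unitary ?n Q" unfolding Q_def by (rule extQ_unitary[OF V])
  have Qc: "Q \<in> carrier_mat ?n ?n" unfolding Q_def by simp
  have A'eq: "A' = Q * dmat ?n l * adj Q"
  proof (rule eq_matI)
    fix i j assume "i < dim_row (Q * dmat ?n l * adj Q)" "j < dim_col (Q * dmat ?n l * adj Q)"
    hence i: "i < ?n" and j: "j < ?n" using Qc by auto
    have "(Q * dmat ?n l * adj Q) $$ (i,j) = (\<Sum>k<?n. Q $$ (i,k) * l k * cnj (Q $$ (j,k)))"
      by (rule UDU_index[OF Qc i j])
    also have "\<dots> = Q $$ (i,0) * l 0 * cnj (Q $$ (j,0)) + (\<Sum>k<m. Q $$ (i,Suc k) * l (Suc k) * cnj (Q $$ (j,Suc k)))"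
      by (rule sum.lessThan_Suc_shift)
    also have "\<dots> = A' $$ (i,j)"
    proof (cases i)
      case 0 then show ?thesis using j A'row[of j] e_real
        by (cases j, auto simp: Q_def extQ_def l_def complex_eq_iff)
    next
      case (Suc i') note ii = this
      show ?thesis
      proof (cases j)
        case 0 then show ?thesis using ii i A'col[of i] by (auto simp: Q_def extQ_def)
      next
        case (Suc j')
        have "A' $$ (i,j) = A3 $$ (i',j')" using ii Suc i j unfolding A3_def by auto
        also have "\<dots> = (\<Sum>k<m. V $$ (i',k) * l3 k * cnj (V $$ (j',k)))"
          unfolding A3 using ii Suc i j by (intro UDU_index[OF Vc], auto)
        finally show ?thesis using ii Suc i j by (auto simp: Q_def extQ_def l_def)
      qed
    qed
    finally show "A' $$ (i,j) = (Q * dmat ?n l * adj Q) $$ (i,j)" by simp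
  qed (insert Qc A'c, auto)
  have "A = W * A' * adj W" unfolding A'_def using unitary_conj_back[OF W A] by simp
  also have "\<dots> = (W * Q) * dmat ?n l * adj (W * Q)" unfolding A'eq
    by (rule mult_assoc_UQD[OF Wc Qc dmat_carrier])
  finally show ?case using unitary_mult[OF W Q] by blast
qed

definition eta :: "real \<Rightarrow> real" where "eta x = - (x * ln x)"

lemma ln_diff_ge: fixes x y :: real assumes "x > 0" "y > 0" shows "ln x - ln y \<ge> 1 - y / x"
proof -
  have "ln (y / x) \<le> y / x - 1" using assms by (intro ln_le_minus_one) simp
  moreover have "ln (y / x) = ln y - ln x" using assms by (simp add: ln_div)
  ultimately show ?thesis by linarith
qed

lemma jensen_eta:
  fixes w lam :: "'k \<Rightarrow> real"
  assumes K: "finite K" and w: "\<And>k. k \<in> K \<Longrightarrow> w k \<ge> 0" and l: "\<And>k. k \<in> K \<Longrightarrow> lam k \<ge> 0"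
    and s: "(\<Sum>k\<in>K. w k) \<le> 1"
  shows "(\<Sum>k\<in>K. w k * eta (lam k)) \<le> eta (\<Sum>k\<in>K. w k * lam k)"
proof -
  define p where "p = (\<Sum>k\<in>K. w k * lam k)"
  have p0: "p \<ge> 0" unfolding p_def using w l by (intro sum_nonneg, auto)
  show ?thesis
  proof (cases "p = 0")
    case True
    then have "\<forall>k\<in>K. w k * lam k = 0" using sum_nonneg_eq_0_iff[OF K, of "\<lambda>k. w k * lam k"] w l
      unfolding p_def by auto
    then have "(\<Sum>k\<in>K. w k * eta (lam k)) = 0" unfolding eta_def
      by (intro sum.neutral, auto)
    then show ?thesis using True unfolding p_def eta_def by simp
  next
    case False
    then have pp: "p > 0" using p0 by auto
    have trm: "w k * lam k * (ln (lam k) - ln p) \<ge> w k * lam k - w k * p" if k: "k \<in> K" for k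
    proof (cases "lam k = 0")
      case True then show ?thesis using w[OF k] pp by simp
    next
      case False
      then have lk: "lam k > 0" using l[OF k] by auto
      have "w k * lam k * (ln (lam k) - ln p) \<ge> w k * lam k * (1 - p / lam k)"
        using ln_diff_ge[OF lk pp] w[OF k] lk by (intro mult_left_mono, auto)
      also have "w k * lam k * (1 - p / lam k) = w k * lam k - w k * p" using lk by (simp add: field_simps)
      finally show ?thesis .
    qed
    have "(\<Sum>k\<in>K. w k * lam k - w k * p) \<le> (\<Sum>k\<in>K. w k * lam k * (ln (lam k) - ln p))"
      by (rule sum_mono, rule trm)
    moreover have "(\<Sum>k\<in>K. w k * lam k - w k * p) = (\<Sum>k\<in>K. w k * lam k) - (\<Sum>k\<in>K. w k) * p"
      by (simp add: sum_subtractf sum_distrib_right)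
    moreover have "(\<Sum>k\<in>K. w k * lam k) - (\<Sum>k\<in>K. w k) * p = p - p * (\<Sum>k\<in>K. w k)"
      unfolding p_def by simp
    moreover have "p - p * (\<Sum>k\<in>K. w k) \<ge> 0" using s pp by (simp add: mult_left_le)
    moreover have "(\<Sum>k\<in>K. w k * lam k * (ln (lam k) - ln p)) =
        (\<Sum>k\<in>K. w k * lam k * ln (lam k)) - p * ln p"
      unfolding p_def by (simp add: right_diff_distrib sum_subtractf sum_distrib_right)
    ultimately have "(\<Sum>k\<in>K. w k * lam k * ln (lam k)) - p * ln p \<ge> 0" by linarith
    then show ?thesis unfolding eta_def p_def[symmetric]
      by (simp add: sum_negf ac_simps)
  qed
qed

lemma classical_subadd:
  fixes p :: "nat \<Rightarrow> nat \<Rightarrow> real"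
  assumes p: "\<And>a c. a < NA \<Longrightarrow> c < NC \<Longrightarrow> p a c \<ge> 0"
    and tot: "(\<Sum>a<NA. \<Sum>c<NC. p a c) = 1"
  shows "(\<Sum>a<NA. \<Sum>c<NC. eta (p a c)) \<le> (\<Sum>a<NA. eta (\<Sum>c<NC. p a c)) + (\<Sum>c<NC. eta (\<Sum>a<NA. p a c))"
proof -
  define q where "q a = (\<Sum>c<NC. p a c)" for a
  define r where "r c = (\<Sum>a<NA. p a c)" for c
  have q0: "q a \<ge> 0" if "a < NA" for a unfolding q_def using p that by (intro sum_nonneg, auto)
  have r0: "r c \<ge> 0" if "c < NC" for c unfolding r_def using p that by (intro sum_nonneg, auto)
  have trm: "p a c * (ln (p a c) - ln (q a) - ln (r c)) \<ge> p a c - q a * r c" if a: "a < NA" and c: "c < NC" for a c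
  proof (cases "p a c = 0")
    case True then show ?thesis using q0[OF a] r0[OF c] by simp
  next
    case False
    then have pp: "p a c > 0" using p[OF a c] by auto
    have "p a c \<le> q a" unfolding q_def using p a c
      by (intro member_le_sum, auto)
    then have qp: "q a > 0" using pp by auto
    have "p a c \<le> r c" unfolding r_def using p a c
      by (intro member_le_sum[of a "{..<NA}" "\<lambda>a. p a c"], auto)
    then have rp: "r c > 0" using pp by auto
    have "ln (p a c) - ln (q a * r c) \<ge> 1 - q a * r c / p a c"
      using ln_diff_ge[OF pp] qp rp by auto
    then have "p a c * (ln (p a c) - ln (q a * r c)) \<ge> p a c * (1 - q a * r c / p a c)"
      using pp by (intro mult_left_mono, auto)
    also have "p a c * (1 - q a * r c / p a c) = p a c - q a * r c" using pp by (simp add: field_simps)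
    also have "p a c * (ln (p a c) - ln (q a * r c)) = p a c * (ln (p a c) - ln (q a) - ln (r c))"
      using qp rp by (simp add: ln_mult)
    finally show ?thesis .
  qed
  have "(\<Sum>a<NA. \<Sum>c<NC. p a c - q a * r c) \<le> (\<Sum>a<NA. \<Sum>c<NC. p a c * (ln (p a c) - ln (q a) - ln (r c)))"
    by (intro sum_mono trm, auto)
  moreover have "(\<Sum>a<NA. \<Sum>c<NC. p a c - q a * r c) = (\<Sum>a<NA. \<Sum>c<NC. p a c) - (\<Sum>a<NA. \<Sum>c<NC. q a * r c)"
    by (simp add: sum_subtractf)
  moreover have "(\<Sum>a<NA. \<Sum>c<NC. q a * r c) = 1"
  proof -
    have "(\<Sum>a<NA. \<Sum>c<NC. q a * r c) = (\<Sum>a<NA. q a) * (\<Sum>c<NC. r c)"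
      by (rule sum_product[symmetric])
    also have "(\<Sum>a<NA. q a) = 1" using tot unfolding q_def .
    also have "(\<Sum>c<NC. r c) = 1" using tot unfolding r_def by (subst sum.swap, simp)
    finally show ?thesis by simp
  qed
  moreover have "(\<Sum>a<NA. \<Sum>c<NC. p a c * (ln (p a c) - ln (q a) - ln (r c))) =
     (\<Sum>a<NA. \<Sum>c<NC. p a c * ln (p a c)) - (\<Sum>a<NA. q a * ln (q a)) - (\<Sum>c<NC. r c * ln (r c))"
  proof -
    have "(\<Sum>a<NA. \<Sum>c<NC. p a c * (ln (p a c) - ln (q a) - ln (r c))) =
      (\<Sum>a<NA. \<Sum>c<NC. p a c * ln (p a c)) - (\<Sum>a<NA. \<Sum>c<NC. p a c * ln (q a)) - (\<Sum>a<NA. \<Sum>c<NC. p a c * ln (r c))"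
      by (simp add: right_diff_distrib sum_subtractf)
    moreover have "(\<Sum>a<NA. \<Sum>c<NC. p a c * ln (q a)) = (\<Sum>a<NA. q a * ln (q a))"
      unfolding q_def by (simp add: sum_distrib_right)
    moreover have "(\<Sum>a<NA. \<Sum>c<NC. p a c * ln (r c)) = (\<Sum>c<NC. r c * ln (r c))"
      unfolding r_def by (subst sum.swap, simp add: sum_distrib_right)
    ultimately show ?thesis by simp
  qed
  moreover note tot
  ultimately have "(\<Sum>a<NA. \<Sum>c<NC. p a c * ln (p a c)) - (\<Sum>a<NA. q a * ln (q a)) - (\<Sum>c<NC. r c * ln (r c)) \<ge> 0"
    by linarith
  then show ?thesis unfolding eta_def q_def[symmetric] r_def[symmetric]
    by (simp add: sum_negf)
qed

lemma max_entropy: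
  fixes q :: "nat \<Rightarrow> real"
  assumes q: "\<And>a. a < N \<Longrightarrow> q a \<ge> 0" and tot: "(\<Sum>a<N. q a) = 1"
  shows "(\<Sum>a<N. eta (q a)) \<le> ln (real N)"
proof -
  have N: "N > 0" using tot by (cases N, auto)
  have trm: "q a * (ln (q a) + ln (real N)) \<ge> q a - 1 / real N" if a: "a < N" for a
  proof (cases "q a = 0")
    case True then show ?thesis using N by simp
  next
    case False
    then have qp: "q a > 0" using q[OF a] by auto
    have "ln (q a) - ln (1 / real N) \<ge> 1 - (1 / real N) / q a"
      by (rule ln_diff_ge[OF qp]) (use N in simp)
    then have "q a * (ln (q a) - ln (1 / real N)) \<ge> q a * (1 - (1 / real N) / q a)"
      using qp by (intro mult_left_mono, auto)
    also have "q a * (1 - (1 / real N) / q a) = q a - 1 / real N" using qp by (simp add: field_simps)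
    finally show ?thesis using N by (simp add: ln_div)
  qed
  have "(\<Sum>a<N. q a - 1 / real N) \<le> (\<Sum>a<N. q a * (ln (q a) + ln (real N)))"
    by (intro sum_mono trm, auto)
  moreover have "(\<Sum>a<N. q a - 1 / real N) = 0" using tot N by (simp add: sum_subtractf)
  moreover have "(\<Sum>a<N. q a * (ln (q a) + ln (real N))) = (\<Sum>a<N. q a * ln (q a)) + ln (real N)"
    using tot by (simp add: distrib_left sum.distrib flip: sum_distrib_right)
  ultimately show ?thesis unfolding eta_def by (simp add: sum_negf)
qed

lemma linprod_mset:
  fixes xs ys :: "complex list"
  assumes "(\<Prod>a\<leftarrow>xs. [:- a, 1:]) = (\<Prod>a\<leftarrow>ys. [:- a, 1:])"
  shows "mset xs = mset ys"
  using assms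
proof (induction xs arbitrary: ys)
  case Nil
  show ?case
  proof (cases ys)
    case (Cons y ys')
    have "poly (\<Prod>a\<leftarrow>ys. [:- a, 1:]) y = 0" unfolding Cons by simp
    then have "poly (1 :: complex poly) y = 0" using Nil by simp
    then show ?thesis by simp
  qed simp
next
  case (Cons x xs ys)
  have "poly (\<Prod>a\<leftarrow>ys. [:- a, 1:]) x = 0" using Cons.prems[symmetric] by simp
  then have "0 \<in> set (map (\<lambda>p. poly p x) (map (\<lambda>a. [:- a, 1:]) ys))"
    unfolding poly_prod_list prod_list_zero_iff[symmetric] by simp
  then have xy: "x \<in> set ys" by auto
  have "[:- x, 1:] * (\<Prod>a\<leftarrow>xs. [:- a, 1:]) = [:- x, 1:] * (\<Prod>a\<leftarrow>remove1 x ys. [:- a, 1:])"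
    using Cons.prems prod_list_map_remove1[OF xy, of "\<lambda>a. [:- a, 1:]"] by simp
  then have "(\<Prod>a\<leftarrow>xs. [:- a, 1:]) = (\<Prod>a\<leftarrow>remove1 x ys. [:- a, 1:])"
    by (subst (asm) mult_left_cancel, auto)
  from Cons.IH[OF this] have "mset xs = mset (remove1 x ys)" .
  then show ?case using xy by (simp add: mset_remove1)
qed

lemma vn_entropy_char_poly: "char_poly A = char_poly B \<Longrightarrow> vn_entropy A = vn_entropy B"
  unfolding vn_entropy_def eigvals_list_def by simp

lemma sum_list_mset_eq: "mset xs = mset ys \<Longrightarrow> sum_list (map f xs) = sum_list (map f ys)"
  for f :: "'a \<Rightarrow> real"
proof -
  assume "mset xs = mset ys"
  then have "mset (map f xs) = mset (map f ys)" by simp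
  then show ?thesis by (metis sum_mset_sum_list)
qed

lemma sum_list_map_upt0: "sum_list (map f [0..<n]) = (\<Sum>i<n. f i)"
  by (induction n, auto)

lemma vn_entropy_diag:
  assumes U: "unitary n U" and A: "A = U * dmat n l * adj U"
  shows "vn_entropy A = (\<Sum>k<n. eta (l k))"
proof -
  have Uc: "U \<in> carrier_mat n n" and aU: "adj U \<in> carrier_mat n n"
    and U1: "adj U * U = 1\<^sub>m n" and U2: "U * adj U = 1\<^sub>m n" using U unfolding unitary_def by auto
  have Ac: "A \<in> carrier_mat n n" unfolding A using Uc by auto
  have "similar_mat_wit A (dmat n l) U (adj U)"
    unfolding similar_mat_wit_def Let_def using Ac Uc aU U1 U2 A by auto
  then have "similar_mat A (dmat n l)" unfolding similar_mat_def by blast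
  then have cpA: "char_poly A = char_poly (dmat n l)" by (rule char_poly_similar)
  have "upper_triangular (dmat n l)" unfolding upper_triangular_def dmat_def by auto
  then have "char_poly (dmat n l) = (\<Prod>a\<leftarrow>diag_mat (dmat n l). [:- a, 1:])"
    by (intro char_poly_upper_triangular[of _ n], auto)
  moreover have "diag_mat (dmat n l) = map (\<lambda>i. complex_of_real (l i)) [0..<n]"
    unfolding diag_mat_def dmat_def by auto
  ultimately have cp: "char_poly A = (\<Prod>a\<leftarrow>map (\<lambda>i. complex_of_real (l i)) [0..<n]. [:- a, 1:])"
    using cpA by simp
  have "char_poly A = (\<Prod>a\<leftarrow>eigvals_list A. [:- a, 1:])"
    unfolding eigvals_list_def by (rule someI, rule cp)
  then have "mset (eigvals_list A) = mset (map (\<lambda>i. complex_of_real (l i)) [0..<n])"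
    using cp by (intro linprod_mset, simp)
  then have "vn_entropy A = - sum_list (map (\<lambda>e. Re e * ln (Re e)) (map (\<lambda>i. complex_of_real (l i)) [0..<n]))"
    unfolding vn_entropy_def by (metis sum_list_mset_eq)
  also have "\<dots> = - (\<Sum>i<n. l i * ln (l i))"
    by (simp add: o_def sum_list_map_upt0)
  also have "\<dots> = (\<Sum>k<n. eta (l k))" unfolding eta_def
    by (simp add: sum_negf)
  finally show ?thesis .
qed

lemma bessel:
  fixes u :: "'i \<Rightarrow> nat \<Rightarrow> complex" and z :: "nat \<Rightarrow> complex"
  assumes I: "finite I"
    and orth: "\<And>i j. i \<in> I \<Longrightarrow> j \<in> I \<Longrightarrow> (\<Sum>x<n. cnj (u i x) * u j x) = (if i = j then 1 else 0)"
  shows "(\<Sum>i\<in>I. (cmod (\<Sum>x<n. cnj (u i x) * z x))^2) \<le> (\<Sum>x<n. (cmod (z x))^2)"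
proof -
  define c where "c i = (\<Sum>x<n. cnj (u i x) * z x)" for i
  define t where "t x = (\<Sum>i\<in>I. c i * u i x)" for x
  define r where "r x = z x - t x" for x
  have e1: "(\<Sum>x<n. z x * cnj (t x)) = (\<Sum>i\<in>I. c i * cnj (c i))"
  proof -
    have "(\<Sum>x<n. z x * cnj (t x)) = (\<Sum>x<n. \<Sum>i\<in>I. cnj (c i) * (cnj (u i x) * z x))"
      unfolding t_def by (simp add: cnj_sum sum_distrib_left ac_simps)
    also have "\<dots> = (\<Sum>i\<in>I. cnj (c i) * c i)"
      unfolding c_def by (subst sum.swap, simp add: sum_distrib_left)
    finally show ?thesis by (simp add: ac_simps)
  qed
  have e2: "(\<Sum>x<n. t x * cnj (z x)) = (\<Sum>i\<in>I. c i * cnj (c i))"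
  proof -
    have "(\<Sum>x<n. t x * cnj (z x)) = cnj (\<Sum>x<n. z x * cnj (t x))"
      by (simp add: cnj_sum ac_simps)
    also have "\<dots> = (\<Sum>i\<in>I. c i * cnj (c i))" unfolding e1 by (simp add: cnj_sum ac_simps)
    finally show ?thesis .
  qed
  have e3: "(\<Sum>x<n. t x * cnj (t x)) = (\<Sum>i\<in>I. c i * cnj (c i))"
  proof -
    have "(\<Sum>x<n. t x * cnj (t x)) = (\<Sum>x<n. \<Sum>j\<in>I. \<Sum>i\<in>I. c i * cnj (c j) * (cnj (u j x) * u i x))"
      unfolding t_def by (simp add: cnj_sum sum_distrib_left sum_distrib_right ac_simps)
    also have "\<dots> = (\<Sum>j\<in>I. \<Sum>i\<in>I. \<Sum>x<n. c i * cnj (c j) * (cnj (u j x) * u i x))"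
      by (subst sum.swap, subst (2) sum.swap, rule refl)
    also have "\<dots> = (\<Sum>j\<in>I. \<Sum>i\<in>I. c i * cnj (c j) * (if j = i then 1 else 0))"
      by (intro sum.cong refl, simp add: orth flip: sum_distrib_left)
    also have "\<dots> = (\<Sum>i\<in>I. c i * cnj (c i))"
      using I by (simp add: if_distrib cong: if_cong)
    finally show ?thesis .
  qed
  have "(\<Sum>x<n. r x * cnj (r x)) = (\<Sum>x<n. z x * cnj (z x) - z x * cnj (t x) - t x * cnj (z x) + t x * cnj (t x))"
    unfolding r_def by (intro sum.cong refl, simp add: algebra_simps)
  also have "\<dots> = (\<Sum>x<n. z x * cnj (z x)) - (\<Sum>i\<in>I. c i * cnj (c i))"
    using e1 e2 e3 by (simp add: sum.distrib sum_subtractf)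
  finally have "complex_of_real (\<Sum>x<n. (cmod (r x))^2) =
     complex_of_real (\<Sum>x<n. (cmod (z x))^2) - complex_of_real (\<Sum>i\<in>I. (cmod (c i))^2)"
    by (simp only: sum_mult_cnj)
  then have "(\<Sum>x<n. (cmod (r x))^2) = (\<Sum>x<n. (cmod (z x))^2) - (\<Sum>i\<in>I. (cmod (c i))^2)"
    by (metis of_real_diff of_real_eq_iff)
  moreover have "(\<Sum>x<n. (cmod (r x))^2) \<ge> 0" by (intro sum_nonneg, auto)
  ultimately show ?thesis unfolding c_def by linarith
qed

definition qf :: "nat \<Rightarrow> complex mat \<Rightarrow> (nat \<Rightarrow> complex) \<Rightarrow> complex" where
  "qf n B v = (\<Sum>x<n. \<Sum>y<n. cnj (v x) * B $$ (x,y) * v y)"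

lemma unitary_orth: assumes "unitary n U" "i < n" "j < n"
  shows "(\<Sum>x<n. cnj (U $$ (x,i)) * U $$ (x,j)) = (if i = j then 1 else 0)"
proof -
  have "(adj U * U) $$ (i,j) = (\<Sum>x<n. cnj (U $$ (x,i)) * U $$ (x,j))"
    using assms unfolding unitary_def by (intro adjmult_index, auto)
  then show ?thesis using assms unfolding unitary_def by auto
qed

lemma unitary_compl: assumes "unitary n U" "x < n" "y < n"
  shows "(\<Sum>k<n. U $$ (x,k) * cnj (U $$ (y,k))) = (if x = y then 1 else 0)"
proof -
  have "(U * adj U) $$ (x,y) = (\<Sum>k<n. U $$ (x,k) * cnj (U $$ (y,k)))"
    using assms unfolding unitary_def by (intro multadj_index, auto)
  then show ?thesis using assms unfolding unitary_def by auto
qed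

lemma sum3_swap: "(\<Sum>x\<in>X. \<Sum>y\<in>Y. \<Sum>k\<in>K. F x y k) = (\<Sum>k\<in>K. \<Sum>x\<in>X. \<Sum>y\<in>Y. F x y k)"
proof -
  have "(\<Sum>x\<in>X. \<Sum>y\<in>Y. \<Sum>k\<in>K. F x y k) = (\<Sum>x\<in>X. \<Sum>k\<in>K. \<Sum>y\<in>Y. F x y k)"
    by (rule sum.cong[OF refl], rule sum.swap)
  also have "\<dots> = (\<Sum>k\<in>K. \<Sum>x\<in>X. \<Sum>y\<in>Y. F x y k)" by (rule sum.swap)
  finally show ?thesis .
qed

lemma prod_sums: "(\<Sum>x\<in>X. \<Sum>y\<in>Y. (c::'a::comm_ring) * (a x * b y)) = c * ((\<Sum>x\<in>X. a x) * (\<Sum>y\<in>Y. b y))"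
  by (subst sum_product, simp only: sum_distrib_left)

lemma entropy_le_family:
  fixes u :: "'i \<Rightarrow> nat \<Rightarrow> complex"
  assumes U: "unitary n U" and B: "B = U * dmat n l * adj U" and l0: "\<And>k. k < n \<Longrightarrow> l k \<ge> 0"
    and I: "finite I"
    and orth: "\<And>i j. i \<in> I \<Longrightarrow> j \<in> I \<Longrightarrow> (\<Sum>x<n. cnj (u i x) * u j x) = (if i = j then 1 else 0)"
    and tot: "(\<Sum>i\<in>I. Re (qf n B (u i))) = (\<Sum>k<n. l k)"
  shows "(\<Sum>k<n. eta (l k)) \<le> (\<Sum>i\<in>I. eta (Re (qf n B (u i))))"
proof -
  have Uc: "U \<in> carrier_mat n n" using U unfolding unitary_def by auto
  define g where "g i k = (\<Sum>x<n. cnj (u i x) * U $$ (x,k))" for i k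
  define w where "w i k = (cmod (g i k))^2" for i k
  have w0: "w i k \<ge> 0" for i k unfolding w_def by simp
  have Bxy: "B $$ (x,y) = (\<Sum>k<n. U $$ (x,k) * l k * cnj (U $$ (y,k)))" if "x < n" "y < n" for x y
    unfolding B by (rule UDU_index[OF Uc that])
  have qf_eq: "qf n B (u i) = complex_of_real (\<Sum>k<n. l k * w i k)" for i
  proof -
    have "qf n B (u i) = (\<Sum>x<n. \<Sum>y<n. \<Sum>k<n. complex_of_real (l k) * ((cnj (u i x) * U $$ (x,k)) * (u i y * cnj (U $$ (y,k)))))"
      unfolding qf_def
    proof (intro sum.cong refl)
      fix x y assume "x \<in> {..<n}" "y \<in> {..<n}"
      then show "cnj (u i x) * B $$ (x, y) * u i y = (\<Sum>k<n. complex_of_real (l k) * ((cnj (u i x) * U $$ (x,k)) * (u i y * cnj (U $$ (y,k)))))"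
        by (simp add: Bxy sum_distrib_left sum_distrib_right ac_simps)
    qed
    also have "\<dots> = (\<Sum>k<n. \<Sum>x<n. \<Sum>y<n. complex_of_real (l k) * ((cnj (u i x) * U $$ (x,k)) * (u i y * cnj (U $$ (y,k)))))"
      by (rule sum3_swap)
    also have "\<dots> = (\<Sum>k<n. complex_of_real (l k) * (g i k * cnj (g i k)))"
      unfolding g_def by (intro sum.cong refl, subst prod_sums, simp add: cnj_sum)
    also have "\<dots> = complex_of_real (\<Sum>k<n. l k * w i k)"
      unfolding w_def by (simp add: mult_cnj_sq)
    finally show ?thesis .
  qed
  have row: "(\<Sum>k<n. w i k) = 1" if i: "i \<in> I" for i
  proof -
    have "complex_of_real (\<Sum>k<n. w i k) = (\<Sum>k<n. g i k * cnj (g i k))"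
      unfolding w_def by (simp add: mult_cnj_sq)
    also have "\<dots> = (\<Sum>k<n. \<Sum>x<n. \<Sum>y<n. 1 * ((cnj (u i x) * U $$ (x,k)) * (u i y * cnj (U $$ (y,k)))))"
      unfolding g_def by (intro sum.cong refl, subst prod_sums, simp add: cnj_sum)
    also have "\<dots> = (\<Sum>x<n. \<Sum>y<n. \<Sum>k<n. 1 * ((cnj (u i x) * U $$ (x,k)) * (u i y * cnj (U $$ (y,k)))))"
      by (rule sum3_swap[symmetric])
    also have "\<dots> = (\<Sum>x<n. \<Sum>y<n. cnj (u i x) * u i y * (\<Sum>k<n. U $$ (x,k) * cnj (U $$ (y,k))))"
      by (intro sum.cong refl, simp add: sum_distrib_left ac_simps)
    also have "\<dots> = (\<Sum>x<n. \<Sum>y<n. cnj (u i x) * u i y * (if x = y then 1 else 0))"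
      by (intro sum.cong refl, simp add: unitary_compl[OF U])
    also have "\<dots> = (\<Sum>x<n. cnj (u i x) * u i x)"
      by (simp add: if_distrib cong: if_cong)
    also have "\<dots> = 1" using orth[OF i i] by simp
    finally show ?thesis by (metis of_real_eq_1_iff)
  qed
  have col: "(\<Sum>i\<in>I. w i k) \<le> 1" if k: "k < n" for k
  proof -
    have "(\<Sum>i\<in>I. w i k) \<le> (\<Sum>x<n. (cmod (U $$ (x,k)))^2)"
      unfolding w_def g_def by (rule bessel[OF I orth])
    also have "complex_of_real (\<Sum>x<n. (cmod (U $$ (x,k)))^2) = (\<Sum>x<n. cnj (U $$ (x,k)) * U $$ (x,k))"
      by (simp add: mult_cnj_sq mult.commute)
    then have "(\<Sum>x<n. (cmod (U $$ (x,k)))^2) = 1" using unitary_orth[OF U k k]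
      by (metis of_real_eq_1_iff)
    finally show ?thesis .
  qed
  define p where "p i = (\<Sum>k<n. w i k * l k)" for i
  have Rep: "Re (qf n B (u i)) = p i" for i unfolding qf_eq p_def by (simp add: ac_simps)
  have jen: "(\<Sum>k<n. w i k * eta (l k)) \<le> eta (p i)" if i: "i \<in> I" for i
    unfolding p_def by (rule jensen_eta, auto simp: w0 l0 row[OF i])
  define s where "s k = (\<Sum>i\<in>I. w i k)" for k
  have "(\<Sum>i\<in>I. p i) = (\<Sum>k<n. l k * s k)"
    unfolding p_def s_def by (subst sum.swap, simp add: sum_distrib_left ac_simps)
  with tot have "(\<Sum>k<n. l k * s k) = (\<Sum>k<n. l k)" unfolding Rep by simp
  then have "(\<Sum>k<n. l k * (1 - s k)) = 0" by (simp add: right_diff_distrib sum_subtractf)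
  moreover have "\<forall>k\<in>{..<n}. l k * (1 - s k) \<ge> 0" using l0 col unfolding s_def by auto
  ultimately have z: "\<forall>k\<in>{..<n}. l k * (1 - s k) = 0"
    using sum_nonneg_eq_0_iff[of "{..<n}" "\<lambda>k. l k * (1 - s k)"] by auto
  have "(\<Sum>k<n. eta (l k)) = (\<Sum>k<n. s k * eta (l k))"
  proof (intro sum.cong refl)
    fix k assume "k \<in> {..<n}"
    with z have "l k = 0 \<or> s k = 1" by auto
    then show "eta (l k) = s k * eta (l k)" unfolding eta_def by auto
  qed
  also have "\<dots> = (\<Sum>i\<in>I. \<Sum>k<n. w i k * eta (l k))"
    unfolding s_def by (subst sum.swap, simp add: sum_distrib_right)
  also have "\<dots> \<le> (\<Sum>i\<in>I. eta (p i))" by (rule sum_mono, rule jen)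
  finally show ?thesis unfolding Rep .
qed

definition tr :: "nat \<Rightarrow> complex mat \<Rightarrow> complex" where
  "tr n B = (\<Sum>i<n. B $$ (i,i))"

definition psd :: "nat \<Rightarrow> complex mat \<Rightarrow> bool" where
  "psd n B \<longleftrightarrow> hermitian n B \<and> (\<forall>v. Re (qf n B v) \<ge> 0)"

lemma qf_UDU: assumes Uc: "U \<in> carrier_mat n n"
  shows "qf n (U * dmat n l * adj U) v = complex_of_real (\<Sum>k<n. l k * (cmod (\<Sum>x<n. cnj (v x) * U $$ (x,k)))^2)"
proof -
  define g where "g k = (\<Sum>x<n. cnj (v x) * U $$ (x,k))" for k
  have Bxy: "(U * dmat n l * adj U) $$ (x,y) = (\<Sum>k<n. U $$ (x,k) * l k * cnj (U $$ (y,k)))" if "x < n" "y < n" for x y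
    by (rule UDU_index[OF Uc that])
  have "qf n (U * dmat n l * adj U) v = (\<Sum>x<n. \<Sum>y<n. \<Sum>k<n. complex_of_real (l k) * ((cnj (v x) * U $$ (x,k)) * (v y * cnj (U $$ (y,k)))))"
    unfolding qf_def
  proof (intro sum.cong refl)
    fix x y assume "x \<in> {..<n}" "y \<in> {..<n}"
    then show "cnj (v x) * (U * dmat n l * adj U) $$ (x, y) * v y = (\<Sum>k<n. complex_of_real (l k) * ((cnj (v x) * U $$ (x,k)) * (v y * cnj (U $$ (y,k)))))"
      by (simp add: Bxy sum_distrib_left sum_distrib_right ac_simps)
  qed
  also have "\<dots> = (\<Sum>k<n. \<Sum>x<n. \<Sum>y<n. complex_of_real (l k) * ((cnj (v x) * U $$ (x,k)) * (v y * cnj (U $$ (y,k)))))"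
    by (rule sum3_swap)
  also have "\<dots> = (\<Sum>k<n. complex_of_real (l k) * (g k * cnj (g k)))"
    unfolding g_def by (intro sum.cong refl, subst prod_sums, simp add: cnj_sum)
  also have "\<dots> = complex_of_real (\<Sum>k<n. l k * (cmod (g k))^2)"
    by (simp add: mult_cnj_sq)
  finally show ?thesis unfolding g_def .
qed

lemma qf_UDU_col: assumes U: "unitary n U" and k: "k < n"
  shows "qf n (U * dmat n l * adj U) (\<lambda>x. U $$ (x,k)) = complex_of_real (l k)"
proof -
  have Uc: "U \<in> carrier_mat n n" using U unfolding unitary_def by auto
  have "qf n (U * dmat n l * adj U) (\<lambda>x. U $$ (x,k)) = complex_of_real (\<Sum>j<n. l j * (cmod (if k = j then 1 else 0))^2)"
    unfolding qf_UDU[OF Uc] by (intro arg_cong[where f = complex_of_real] sum.cong refl, simp add: unitary_orth[OF U k])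
  also have "(\<Sum>j<n. l j * (cmod (if k = j then 1 else 0))^2) = (\<Sum>j<n. if j = k then l j else 0)"
    by (rule sum.cong, auto)
  also have "\<dots> = l k" using k by simp
  finally show ?thesis .
qed

lemma tr_UDU: assumes U: "unitary n U"
  shows "tr n (U * dmat n l * adj U) = complex_of_real (\<Sum>k<n. l k)"
proof -
  have Uc: "U \<in> carrier_mat n n" using U unfolding unitary_def by auto
  have "tr n (U * dmat n l * adj U) = (\<Sum>i<n. \<Sum>k<n. U $$ (i,k) * l k * cnj (U $$ (i,k)))"
    unfolding tr_def by (intro sum.cong refl, rule UDU_index[OF Uc], auto)
  also have "\<dots> = (\<Sum>k<n. complex_of_real (l k) * (\<Sum>i<n. cnj (U $$ (i,k)) * U $$ (i,k)))"
    by (subst sum.swap, simp add: sum_distrib_left ac_simps)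
  also have "\<dots> = (\<Sum>k<n. complex_of_real (l k))"
    by (intro sum.cong refl, simp add: unitary_orth[OF U])
  finally show ?thesis by simp
qed

lemma psd_spectral: assumes "psd n B"
  shows "\<exists>U l. unitary n U \<and> B = U * dmat n l * adj U \<and> (\<forall>k<n. l k \<ge> 0) \<and>
     tr n B = complex_of_real (\<Sum>k<n. l k)"
proof -
  have h: "hermitian n B" and pos: "\<And>v. Re (qf n B v) \<ge> 0" using assms unfolding psd_def by auto
  obtain U l where U: "unitary n U" and B: "B = U * dmat n l * adj U" using spectral[OF h] by blast
  have "l k \<ge> 0" if k: "k < n" for k
    using pos[of "\<lambda>x. U $$ (x,k)"] unfolding B qf_UDU_col[OF U k] by simp
  then show ?thesis using U B tr_UDU[OF U] by blast
qed

lemma psd_entropy_le_family: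
  fixes u :: "'i \<Rightarrow> nat \<Rightarrow> complex"
  assumes B: "psd n B" and trB: "tr n B = 1" and I: "finite I"
    and orth: "\<And>i j. i \<in> I \<Longrightarrow> j \<in> I \<Longrightarrow> (\<Sum>x<n. cnj (u i x) * u j x) = (if i = j then 1 else 0)"
    and tot: "(\<Sum>i\<in>I. Re (qf n B (u i))) = 1"
  shows "vn_entropy B \<le> (\<Sum>i\<in>I. eta (Re (qf n B (u i))))"
proof -
  obtain U l where U: "unitary n U" and Beq: "B = U * dmat n l * adj U" and l0: "\<forall>k<n. l k \<ge> 0"
    and t: "tr n B = complex_of_real (\<Sum>k<n. l k)" using psd_spectral[OF B] by blast
  have "(\<Sum>k<n. l k) = 1" using t trB by (metis of_real_eq_1_iff)
  then have tot': "(\<Sum>i\<in>I. Re (qf n B (u i))) = (\<Sum>k<n. l k)" using tot by simp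
  have "vn_entropy B = (\<Sum>k<n. eta (l k))" by (rule vn_entropy_diag[OF U Beq])
  also have "\<dots> \<le> (\<Sum>i\<in>I. eta (Re (qf n B (u i))))"
    by (rule entropy_le_family[OF U Beq _ I orth tot'], insert l0, auto)
  finally show ?thesis .
qed

lemma psd_max_entropy:
  assumes B: "psd n B" and trB: "tr n B = 1"
  shows "vn_entropy B \<le> ln (real n)"
proof -
  obtain U l where U: "unitary n U" and Beq: "B = U * dmat n l * adj U" and l0: "\<forall>k<n. l k \<ge> 0"
    and t: "tr n B = complex_of_real (\<Sum>k<n. l k)" using psd_spectral[OF B] by blast
  have "(\<Sum>k<n. l k) = 1" using t trB by (metis of_real_eq_1_iff)
  have "vn_entropy B = (\<Sum>k<n. eta (l k))" by (rule vn_entropy_diag[OF U Beq])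
  also have "\<dots> \<le> ln (real n)" by (rule max_entropy, insert l0 \<open>(\<Sum>k<n. l k) = 1\<close>, auto)
  finally show ?thesis .
qed

lemma density_psd: assumes "density_op n B" shows "psd n B" "tr n B = 1"
  using assms unfolding density_op_def psd_def hermitian_def qf_def tr_def by blast+

lemma psd_density: assumes "psd n B" "tr n B = 1" shows "density_op n B"
  using assms unfolding density_op_def psd_def hermitian_def qf_def tr_def by blast

lemma dmat_dims[simp]: "dim_row (dmat n l) = n" "dim_col (dmat n l) = n"
  unfolding dmat_def by auto

lemma qf_NN: assumes N: "N \<in> carrier_mat a c"
  shows "qf a (N * adj N) v = complex_of_real (\<Sum>k<c. (cmod (\<Sum>x<a. cnj (v x) * N $$ (x,k)))^2)"
proof -
  define g where "g k = (\<Sum>x<a. cnj (v x) * N $$ (x,k))" for k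
  have Bxy: "(N * adj N) $$ (x,y) = (\<Sum>k<c. N $$ (x,k) * cnj (N $$ (y,k)))" if "x < a" "y < a" for x y
    by (rule multadj_index[OF N N that])
  have "qf a (N * adj N) v = (\<Sum>x<a. \<Sum>y<a. \<Sum>k<c. 1 * ((cnj (v x) * N $$ (x,k)) * (v y * cnj (N $$ (y,k)))))"
    unfolding qf_def
  proof (intro sum.cong refl)
    fix x y assume "x \<in> {..<a}" "y \<in> {..<a}"
    then show "cnj (v x) * (N * adj N) $$ (x, y) * v y = (\<Sum>k<c. 1 * ((cnj (v x) * N $$ (x,k)) * (v y * cnj (N $$ (y,k)))))"
      by (simp add: Bxy sum_distrib_left sum_distrib_right ac_simps)
  qed
  also have "\<dots> = (\<Sum>k<c. \<Sum>x<a. \<Sum>y<a. 1 * ((cnj (v x) * N $$ (x,k)) * (v y * cnj (N $$ (y,k)))))"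
    by (rule sum3_swap)
  also have "\<dots> = (\<Sum>k<c. 1 * (g k * cnj (g k)))"
    unfolding g_def by (intro sum.cong refl, subst prod_sums, simp add: cnj_sum)
  also have "\<dots> = complex_of_real (\<Sum>k<c. (cmod (g k))^2)"
    by (simp add: mult_cnj_sq)
  finally show ?thesis unfolding g_def .
qed

lemma psd_NN: assumes N: "N \<in> carrier_mat a c" shows "psd a (N * adj N)"
proof -
  have "adj (N * adj N) = N * adj N" using N by (simp add: adj_mult[of _ a c _ a])
  then have "hermitian a (N * adj N)" using N by (intro adj_hermitian, auto)
  moreover have "Re (qf a (N * adj N) v) \<ge> 0" for v unfolding qf_NN[OF N] by (simp add: sum_nonneg)
  ultimately show ?thesis unfolding psd_def by auto
qed

lemma tr_NN: assumes N: "N \<in> carrier_mat a c"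
  shows "tr a (N * adj N) = tr c (adj N * N)"
proof -
  have "tr a (N * adj N) = (\<Sum>i<a. \<Sum>k<c. N $$ (i,k) * cnj (N $$ (i,k)))"
    unfolding tr_def by (intro sum.cong refl, rule multadj_index[OF N N], auto)
  also have "\<dots> = (\<Sum>k<c. \<Sum>i<a. cnj (N $$ (i,k)) * N $$ (i,k))"
    by (subst sum.swap, simp add: ac_simps)
  also have "\<dots> = tr c (adj N * N)"
    unfolding tr_def by (intro sum.cong refl, rule adjmult_index[OF N N, symmetric], auto)
  finally show ?thesis .
qed

lemma qf_scale: "qf n B (\<lambda>x. f x * s) = cnj s * s * qf n B f"
  unfolding qf_def by (simp add: sum_distrib_left ac_simps)

lemma pure_core: assumes N: "N \<in> carrier_mat a c" and t: "tr a (N * adj N) = 1"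
  shows "vn_entropy (N * adj N) \<le> vn_entropy (adj N * N)"
proof -
  have aN: "adj N \<in> carrier_mat c a" using N by auto
  define M2 where "M2 = adj N * N"
  have M2c: "M2 \<in> carrier_mat c c" unfolding M2_def using N by auto
  have "psd c M2" unfolding M2_def using psd_NN[OF aN] by simp
  from psd_spectral[OF this] obtain V mu where V: "unitary c V" and M2: "M2 = V * dmat c mu * adj V"
    and mu0: "\<forall>k<c. mu k \<ge> 0" and trM2: "tr c M2 = complex_of_real (\<Sum>k<c. mu k)" by blast
  have Vc: "V \<in> carrier_mat c c" and aV: "adj V \<in> carrier_mat c c"
    and V1: "adj V * V = 1\<^sub>m c" and V2: "V * adj V = 1\<^sub>m c" using V unfolding unitary_def by auto
  have musum: "(\<Sum>k<c. mu k) = 1" using trM2 t tr_NN[OF N] unfolding M2_def by (metis of_real_eq_1_iff)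
  define NV where "NV = N * V"
  have NVc: "NV \<in> carrier_mat a c" unfolding NV_def using N Vc by auto
  have D: "dmat c mu \<in> carrier_mat c c" by simp
  have K2: "adj NV * N = dmat c mu * adj V"
  proof -
    have "adj NV * N = adj V * adj N * N" unfolding NV_def using N Vc by (simp add: adj_mult[of _ a c _ c])
    also have "\<dots> = adj V * M2" unfolding M2_def using aV aN N by (intro assoc_mult_mat, auto)
    also have "\<dots> = adj V * (V * (dmat c mu * adj V))" unfolding M2
      using assoc_mult_mat[OF Vc D aV] by simp
    also have "\<dots> = (adj V * V) * (dmat c mu * adj V)"
      by (rule assoc_mult_mat[OF aV Vc mult_carrier_mat[OF D aV], symmetric])
    also have "\<dots> = dmat c mu * adj V" unfolding V1 by (rule left_mult_one_mat[OF mult_carrier_mat[OF D aV]])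
    finally show ?thesis .
  qed
  have K1: "adj NV * NV = dmat c mu"
  proof -
    have "adj NV * NV = (adj NV * N) * V" unfolding NV_def using N Vc NVc
      by (intro assoc_mult_mat[symmetric], auto simp: NV_def)
    also have "\<dots> = dmat c mu * (adj V * V)" unfolding K2 using D aV Vc by (intro assoc_mult_mat, auto)
    finally show ?thesis using V1 D by simp
  qed
  define I where "I = {k. k < c \<and> mu k > 0}"
  have I: "finite I" unfolding I_def by auto
  define u where "u k x = NV $$ (x,k) * complex_of_real (1 / sqrt (mu k))" for k x
  have inner: "(\<Sum>x<a. cnj (NV $$ (x,k)) * NV $$ (x,j)) = (if k = j then complex_of_real (mu k) else 0)"
    if "k < c" "j < c" for k j
  proof -
    have "(\<Sum>x<a. cnj (NV $$ (x,k)) * NV $$ (x,j)) = (adj NV * NV) $$ (k,j)"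
      by (rule adjmult_index[OF NVc NVc that, symmetric])
    then show ?thesis unfolding K1 using that by (simp add: dmat_def)
  qed
  have orth: "(\<Sum>x<a. cnj (u k x) * u j x) = (if k = j then 1 else 0)" if "k \<in> I" "j \<in> I" for k j
  proof -
    have kj: "k < c" "j < c" "mu k > 0" "mu j > 0" using that unfolding I_def by auto
    have "(\<Sum>x<a. cnj (u k x) * u j x) = (\<Sum>x<a. cnj (NV $$ (x,k)) * NV $$ (x,j)) *
        complex_of_real (1 / sqrt (mu k) * (1 / sqrt (mu j)))"
      unfolding u_def sum_distrib_right by (intro sum.cong refl, simp)
    also have "\<dots> = (if k = j then 1 else 0)" unfolding inner[OF kj(1,2)] using kj
      by (auto simp: real_sqrt_mult[symmetric] simp flip: of_real_mult)
    finally show ?thesis .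
  qed
  have qfk: "Re (qf a (N * adj N) (u k)) = mu k" if "k < c" for k
  proof -
    have g: "(\<Sum>x<a. cnj (NV $$ (x,k)) * N $$ (x,y)) = mu k * cnj (V $$ (y,k))" if y: "y < c" for y
    proof -
      have "(\<Sum>x<a. cnj (NV $$ (x,k)) * N $$ (x,y)) = (adj NV * N) $$ (k,y)"
        by (rule adjmult_index[OF NVc N \<open>k < c\<close> y, symmetric])
      also have "\<dots> = (\<Sum>l<c. dmat c mu $$ (k,l) * adj V $$ (l,y))" unfolding K2
        by (rule mult_index[OF D aV \<open>k < c\<close> y])
      also have "\<dots> = (\<Sum>l<c. (if l = k then mu k * cnj (V $$ (y,k)) else 0))"
        using \<open>k < c\<close> y Vc by (intro sum.cong refl, auto simp: dmat_def)
      also have "\<dots> = mu k * cnj (V $$ (y,k))" using \<open>k < c\<close> by simp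
      finally show ?thesis .
    qed
    have "qf a (N * adj N) (\<lambda>x. NV $$ (x,k)) = complex_of_real (\<Sum>y<c. (cmod (mu k * cnj (V $$ (y,k))))^2)"
      unfolding qf_NN[OF N] by (intro arg_cong[where f = complex_of_real] sum.cong refl, simp add: g)
    also have "\<dots> = complex_of_real ((mu k)^2 * (\<Sum>y<c. (cmod (V $$ (y,k)))^2))"
      by (simp add: norm_mult power_mult_distrib sum_distrib_left)
    also have "(\<Sum>y<c. (cmod (V $$ (y,k)))^2) = 1"
    proof -
      have "complex_of_real (\<Sum>y<c. (cmod (V $$ (y,k)))^2) = (\<Sum>y<c. cnj (V $$ (y,k)) * V $$ (y,k))"
        by (simp add: mult_cnj_sq mult.commute)
      then show ?thesis using unitary_orth[OF V that that] by (metis of_real_eq_1_iff)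
    qed
    finally have q: "qf a (N * adj N) (\<lambda>x. NV $$ (x,k)) = complex_of_real ((mu k)^2)" by simp
    show ?thesis
    proof (cases "mu k = 0")
      case True then show ?thesis unfolding u_def by (simp add: qf_def)
    next
      case False
      then have mp: "mu k > 0" using mu0 that by force
      have "qf a (N * adj N) (u k) = cnj (complex_of_real (1 / sqrt (mu k))) * complex_of_real (1 / sqrt (mu k)) *
          complex_of_real ((mu k)^2)"
        unfolding u_def qf_scale q ..
      also have "\<dots> = complex_of_real (mu k)" using mp
        by (simp flip: of_real_mult of_real_power, simp add: power2_eq_square field_simps)
      finally show ?thesis by simp
    qed
  qed
  have "(\<Sum>k\<in>I. Re (qf a (N * adj N) (u k))) = (\<Sum>k\<in>I. mu k)"
    by (intro sum.cong refl, rule qfk, auto simp: I_def)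
  also have "\<dots> = (\<Sum>k<c. mu k)"
    by (rule sum.mono_neutral_left, insert mu0, auto simp: I_def)
  finally have tot: "(\<Sum>k\<in>I. Re (qf a (N * adj N) (u k))) = 1" using musum by simp
  have "vn_entropy (N * adj N) \<le> (\<Sum>k\<in>I. eta (Re (qf a (N * adj N) (u k))))"
    by (rule psd_entropy_le_family[OF psd_NN[OF N] t I orth tot])
  also have "\<dots> = (\<Sum>k\<in>I. eta (mu k))"
    by (intro sum.cong refl, subst qfk, auto simp: I_def)
  also have "\<dots> = (\<Sum>k<c. eta (mu k))"
    by (rule sum.mono_neutral_left, insert mu0, auto simp: I_def eta_def)
  also have "\<dots> = vn_entropy M2" by (rule vn_entropy_diag[OF V M2, symmetric])
  finally show ?thesis unfolding M2_def .
qed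

lemma pure_eq: assumes N: "N \<in> carrier_mat a c" and t: "tr a (N * adj N) = 1"
  shows "vn_entropy (N * adj N) = vn_entropy (adj N * N)"
proof -
  have aN: "adj N \<in> carrier_mat c a" using N by auto
  have t2: "tr c (adj N * adj (adj N)) = 1" using tr_NN[OF N] t by simp
  show ?thesis using pure_core[OF N t] pure_core[OF aN t2] by simp
qed

definition dig :: "nat \<Rightarrow> nat \<Rightarrow> nat \<Rightarrow> nat" where "dig d t i = i div d ^ t mod d"

definition proj :: "nat \<Rightarrow> nat list \<Rightarrow> nat \<Rightarrow> nat" where
  "proj d L i = (\<Sum>p<length L. dig d (L ! p) i * d ^ p)"

lemma dig_lt: "d > 0 \<Longrightarrow> dig d t i < d" unfolding dig_def by simp

lemma numsum_lt: fixes d :: nat and f :: "nat \<Rightarrow> nat" assumes "d > 0" "\<And>t. t < m \<Longrightarrow> f t < d"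
  shows "(\<Sum>t<m. f t * d ^ t) < d ^ m"
  using assms(2)
proof (induction m)
  case 0 then show ?case by simp
next
  case (Suc m)
  have "(\<Sum>t<m. f t * d ^ t) < d ^ m" using Suc by auto
  moreover have "f m \<le> d - 1" using Suc.prems[of m] by auto
  then have "f m * d ^ m \<le> (d - 1) * d ^ m" by (intro mult_right_mono, auto)
  ultimately have "(\<Sum>t<m. f t * d ^ t) + f m * d ^ m < d ^ m + (d - 1) * d ^ m" by linarith
  also have "d ^ m + (d - 1) * d ^ m = d ^ Suc m" using assms(1)
    by (cases d, auto simp: algebra_simps)
  finally show ?case by simp
qed

lemma dig_numsum: fixes f :: "nat \<Rightarrow> nat" assumes d: "d > 0" and f: "\<And>t. t < m \<Longrightarrow> f t < d"
  shows "dig d t (\<Sum>s<m. f s * d ^ s) = (if t < m then f t else 0)"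
  using f
proof (induction m arbitrary: t)
  case 0 then show ?case by (simp add: dig_def)
next
  case (Suc m)
  define S where "S = (\<Sum>s<m. f s * d ^ s)"
  have S: "S < d ^ m" unfolding S_def using numsum_lt[OF d, of m f] Suc.prems by auto
  have fm: "f m < d" using Suc.prems by auto
  have eq: "(\<Sum>s<Suc m. f s * d ^ s) = S + f m * d ^ m" unfolding S_def by simp
  show ?case
  proof (cases "t < m")
    case True
    have dm: "d ^ m = d ^ t * d ^ (m - t)" using True by (simp flip: power_add)
    have "S + f m * d ^ m = S + (f m * d ^ (m - t)) * d ^ t" unfolding dm by (simp add: ac_simps)
    then have "(S + f m * d ^ m) div d ^ t = (S + (f m * d ^ (m - t)) * d ^ t) div d ^ t"
      by (rule arg_cong[where f = "\<lambda>x. x div d ^ t"])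
    also have "\<dots> = S div d ^ t + f m * d ^ (m - t)"
      using d by simp
    also have "\<dots> mod d = S div d ^ t mod d"
    proof -
      have "d ^ (m - t) = d * d ^ (m - t - 1)" using True by (cases "m - t", auto)
      then have "S div d ^ t + f m * d ^ (m - t) = S div d ^ t + (f m * d ^ (m - t - 1)) * d" by simp
      then show ?thesis by (metis mod_mult_self1)
    qed
    finally have "dig d t (S + f m * d ^ m) = dig d t S" unfolding dig_def .
    then show ?thesis unfolding eq using Suc.IH[of t] Suc.prems True unfolding S_def by auto
  next
    case False
    show ?thesis
    proof (cases "t = m")
      case True
      have "(S + f m * d ^ m) div d ^ m = f m" using S d by (simp add: div_add1_eq)
      then show ?thesis unfolding eq dig_def True using fm by simp
    next
      case False
      with \<open>\<not> t < m\<close> have tm: "t > m" by auto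
      have "S + f m * d ^ m < d ^ Suc m" using numsum_lt[OF d, of "Suc m" f] Suc.prems eq unfolding S_def by auto
      also have "\<dots> \<le> d ^ t" using tm d by (intro power_increasing, auto)
      finally show ?thesis unfolding eq dig_def using tm by simp
    qed
  qed
qed

lemma mod_expand: assumes "d > 0" shows "i mod d ^ m = (\<Sum>t<m. dig d t i * d ^ t)"
proof (induction m)
  case 0 then show ?case by simp
next
  case (Suc m)
  have "i mod d ^ Suc m = i mod (d ^ m * d)" by (simp add: ac_simps)
  also have "\<dots> = d ^ m * (i div d ^ m mod d) + i mod d ^ m" by (rule mod_mult2_eq)
  finally show ?case using Suc by (simp add: dig_def ac_simps)
qed

lemma num_expand: assumes "d > 0" "i < d ^ m" shows "i = (\<Sum>t<m. dig d t i * d ^ t)"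
  using mod_expand[OF assms(1), of i m] assms(2) by simp

lemma num_eqI: assumes "d > 0" "i < d ^ m" "j < d ^ m" "\<And>t. t < m \<Longrightarrow> dig d t i = dig d t j"
  shows "i = j"
  using num_expand[OF assms(1,2)] num_expand[OF assms(1,3)] assms(4) by (metis (no_types, lifting) lessThan_iff sum.cong)

lemma proj_lt: assumes "d > 0" shows "proj d L i < d ^ length L"
  unfolding proj_def by (rule numsum_lt[OF assms], rule dig_lt[OF assms])

lemma dig_proj: assumes "d > 0" "q < length L" shows "dig d q (proj d L i) = dig d (L ! q) i"
  unfolding proj_def using dig_numsum[OF assms(1), of "length L" "\<lambda>p. dig d (L ! p) i" q] assms dig_lt by auto

lemma proj_eq_iff: assumes "d > 0"
  shows "proj d L i = proj d L j \<longleftrightarrow> (\<forall>q<length L. dig d (L ! q) i = dig d (L ! q) j)"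
proof
  assume "proj d L i = proj d L j"
  then show "\<forall>q<length L. dig d (L ! q) i = dig d (L ! q) j" using dig_proj[OF assms] by metis
next
  assume "\<forall>q<length L. dig d (L ! q) i = dig d (L ! q) j"
  then show "proj d L i = proj d L j" unfolding proj_def by (intro sum.cong, auto)
qed

lemma proj_map: assumes "d > 0" "\<forall>q \<in> set L. q < length L2"
  shows "proj d L (proj d L2 i) = proj d (map ((!) L2) L) i"
proof -
  have "proj d L (proj d L2 i) = (\<Sum>p<length L. dig d (L ! p) (proj d L2 i) * d ^ p)"
    by (simp only: proj_def[of d L])
  also have "\<dots> = (\<Sum>p<length L. dig d (L2 ! (L ! p)) i * d ^ p)"
    using assms by (intro sum.cong refl, auto simp: dig_proj)
  also have "\<dots> = proj d (map ((!) L2) L) i" unfolding proj_def by simp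
  finally show ?thesis .
qed

lemma proj_upt: assumes "d > 0" "i < d ^ m" shows "proj d [0..<m] i = i"
  unfolding proj_def using num_expand[OF assms] by simp

definition pos :: "nat list \<Rightarrow> nat \<Rightarrow> nat" where
  "pos L t = inv_into {..<length L} ((!) L) t"

lemma pos_nth: "distinct L \<Longrightarrow> q < length L \<Longrightarrow> pos L (L ! q) = q"
  unfolding pos_def by (rule inv_into_f_f, auto simp: inj_on_def nth_eq_iff_index_eq)

lemma nth_pos: "t \<in> set L \<Longrightarrow> L ! (pos L t) = t \<and> pos L t < length L"
  unfolding pos_def by (metis f_inv_into_f in_set_conv_nth inv_into_into lessThan_iff image_eqI)

lemma sum_list_pos: assumes "distinct L"
  shows "(\<Sum>p<length L. F p (L ! p)) = (\<Sum>t\<in>set L. F (pos L t) t)"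
proof -
  have b: "bij_betw ((!) L) {..<length L} (set L)" using assms by (intro bij_betw_nth, auto)
  have "(\<Sum>t\<in>set L. F (pos L t) t) = (\<Sum>p<length L. F (pos L (L ! p)) (L ! p))"
    by (rule sum.reindex_bij_betw[OF b, symmetric])
  also have "\<dots> = (\<Sum>p<length L. F p (L ! p))" using assms by (intro sum.cong refl, simp add: pos_nth)
  finally show ?thesis by simp
qed

lemma place_alt: "distinct L \<Longrightarrow> place d L a = (\<Sum>t\<in>set L. dig d (pos L t) a * d ^ t)"
  unfolding place_def dig_def using sum_list_pos[of L "\<lambda>p t. a div d ^ p mod d * d ^ t"] by simp

abbreviation sl :: "nat set \<Rightarrow> nat list" where "sl X \<equiv> sorted_list_of_set X"

definition phi :: "nat \<Rightarrow> nat \<Rightarrow> nat set \<Rightarrow> nat \<Rightarrow> nat \<Rightarrow> nat" where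
  "phi d m X a c = place d (sl X) a + place d (sl ({0..<m} - X)) c"

lemma card_compl: "X \<subseteq> {0..<m} \<Longrightarrow> card ({0..<m} - X) = m - card X"
  by (simp add: card_Diff_subset finite_subset)

context
  fixes d m :: nat and X :: "nat set"
  assumes d: "d > 0" and X: "X \<subseteq> {0..<m}"
begin

private lemma fX: "finite X" using X finite_subset by blast

private lemma setxs: "set (sl X) = X" "distinct (sl X)" "length (sl X) = card X"
  using fX by auto

private lemma setys: "set (sl ({0..<m} - X)) = {0..<m} - X" "distinct (sl ({0..<m} - X))"
  "length (sl ({0..<m} - X)) = m - card X"
  using card_compl[OF X] by auto

definition hdig :: "nat \<Rightarrow> nat \<Rightarrow> nat \<Rightarrow> nat" where
  "hdig a c t = (if t \<in> X then dig d (pos (sl X) t) a else dig d (pos (sl ({0..<m} - X)) t) c)"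

lemma phi_numsum: "phi d m X a c = (\<Sum>t<m. hdig a c t * d ^ t)"
proof -
  have "phi d m X a c = (\<Sum>t\<in>X. dig d (pos (sl X) t) a * d ^ t) +
     (\<Sum>t\<in>{0..<m} - X. dig d (pos (sl ({0..<m} - X)) t) c * d ^ t)"
    unfolding phi_def using setxs setys by (simp add: place_alt)
  also have "\<dots> = (\<Sum>t\<in>X. hdig a c t * d ^ t) + (\<Sum>t\<in>{0..<m} - X. hdig a c t * d ^ t)"
    unfolding hdig_def by (intro arg_cong2[where f = "(+)"] sum.cong refl, auto)
  also have "\<dots> = (\<Sum>t\<in>X \<union> ({0..<m} - X). hdig a c t * d ^ t)"
    by (rule sum.union_disjoint[symmetric], insert fX, auto)
  also have "X \<union> ({0..<m} - X) = {..<m}" using X by auto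
  finally show ?thesis .
qed

lemma hdig_lt: "hdig a c t < d" unfolding hdig_def using dig_lt[OF d] by auto

lemma dig_phi: "t < m \<Longrightarrow> dig d t (phi d m X a c) = hdig a c t"
  unfolding phi_numsum using dig_numsum[OF d, of m "hdig a c" t] hdig_lt by auto

lemma phi_lt: "phi d m X a c < d ^ m"
  unfolding phi_numsum by (rule numsum_lt[OF d hdig_lt])

lemma proj_phi1: assumes a: "a < d ^ card X" shows "proj d (sl X) (phi d m X a c) = a"
proof -
  have "proj d (sl X) (phi d m X a c) = (\<Sum>q<card X. dig d q a * d ^ q)"
    unfolding proj_def setxs(3)
  proof (intro sum.cong refl)
    fix q assume q: "q \<in> {..<card X}"
    then have "sl X ! q \<in> X" using setxs by (metis lessThan_iff nth_mem)
    moreover then have "sl X ! q < m" using X by auto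
    ultimately show "dig d (sl X ! q) (phi d m X a c) * d ^ q = dig d q a * d ^ q"
      using q setxs by (simp add: dig_phi hdig_def pos_nth)
  qed
  also have "\<dots> = a" using num_expand[OF d a] by simp
  finally show ?thesis .
qed

lemma proj_phi2: assumes c: "c < d ^ (m - card X)" shows "proj d (sl ({0..<m} - X)) (phi d m X a c) = c"
proof -
  have "proj d (sl ({0..<m} - X)) (phi d m X a c) = (\<Sum>q<m - card X. dig d q c * d ^ q)"
    unfolding proj_def setys(3)
  proof (intro sum.cong refl)
    fix q assume q: "q \<in> {..<m - card X}"
    then have "sl ({0..<m} - X) ! q \<in> {0..<m} - X" using setys by (metis lessThan_iff nth_mem)
    then show "dig d (sl ({0..<m} - X) ! q) (phi d m X a c) * d ^ q = dig d q c * d ^ q"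
      using q setys by (simp add: dig_phi hdig_def pos_nth)
  qed
  also have "\<dots> = c" using num_expand[OF d c] by simp
  finally show ?thesis .
qed

lemma phi_proj: assumes i: "i < d ^ m"
  shows "phi d m X (proj d (sl X) i) (proj d (sl ({0..<m} - X)) i) = i"
proof (rule num_eqI[OF d phi_lt i])
  fix t assume t: "t < m"
  show "dig d t (phi d m X (proj d (sl X) i) (proj d (sl ({0..<m} - X)) i)) = dig d t i"
  proof (cases "t \<in> X")
    case True
    then have "sl X ! pos (sl X) t = t" "pos (sl X) t < length (sl X)" using nth_pos[of t "sl X"] setxs by auto
    then show ?thesis using True t by (simp add: dig_phi hdig_def dig_proj[OF d])
  next
    case False
    then have tt: "t \<in> set (sl ({0..<m} - X))" using setys t by auto
    then have "sl ({0..<m} - X) ! pos (sl ({0..<m} - X)) t = t" "pos (sl ({0..<m} - X)) t < length (sl ({0..<m} - X))"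
      using nth_pos[OF tt] by auto
    then show ?thesis using False t by (simp add: dig_phi hdig_def dig_proj[OF d])
  qed
qed

lemma proj_bij: "bij_betw (\<lambda>i. (proj d (sl X) i, proj d (sl ({0..<m} - X)) i)) {..<d ^ m}
     ({..<d ^ card X} \<times> {..<d ^ (m - card X)})"
proof (rule bij_betw_byWitness[where f' = "\<lambda>(a,c). phi d m X a c"])
  show "\<forall>i\<in>{..<d ^ m}. (case (proj d (sl X) i, proj d (sl ({0..<m} - X)) i) of (a, c) \<Rightarrow> phi d m X a c) = i"
    using phi_proj by auto
  show "\<forall>ac\<in>{..<d ^ card X} \<times> {..<d ^ (m - card X)}.
     (proj d (sl X) (case ac of (a, c) \<Rightarrow> phi d m X a c), proj d (sl ({0..<m} - X)) (case ac of (a, c) \<Rightarrow> phi d m X a c)) = ac"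
    using proj_phi1 proj_phi2 by auto
  show "(\<lambda>i. (proj d (sl X) i, proj d (sl ({0..<m} - X)) i)) ` {..<d ^ m} \<subseteq> {..<d ^ card X} \<times> {..<d ^ (m - card X)}"
    using proj_lt[OF d, of "sl X"] proj_lt[OF d, of "sl ({0..<m} - X)"] setxs setys by auto
  show "(\<lambda>(a, c). phi d m X a c) ` ({..<d ^ card X} \<times> {..<d ^ (m - card X)}) \<subseteq> {..<d ^ m}"
    using phi_lt by auto
qed

lemma reindex: "(\<Sum>i<d ^ m. F (proj d (sl X) i) (proj d (sl ({0..<m} - X)) i)) =
    (\<Sum>a<d ^ card X. \<Sum>c<d ^ (m - card X). F a c)"
proof -
  have "(\<Sum>i<d ^ m. F (proj d (sl X) i) (proj d (sl ({0..<m} - X)) i)) =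
     (\<Sum>ac\<in>{..<d ^ card X} \<times> {..<d ^ (m - card X)}. case_prod F ac)"
    using sum.reindex_bij_betw[OF proj_bij, of "case_prod F"] by simp
  also have "\<dots> = (\<Sum>a<d ^ card X. \<Sum>c<d ^ (m - card X). F a c)"
    by (rule sum.cartesian_product[symmetric])
  finally show ?thesis .
qed

lemma ptrace_index: assumes "a < d ^ card X" "b < d ^ card X"
  shows "ptrace d m X \<rho> $$ (a,b) = (\<Sum>c<d ^ (m - card X). \<rho> $$ (phi d m X a c, phi d m X b c))"
  unfolding ptrace_def phi_def Let_def using assms by simp

lemma ptrace_carrier: "ptrace d m X \<rho> \<in> carrier_mat (d ^ card X) (d ^ card X)"
  unfolding ptrace_def Let_def by simp

end

lemma reindex2:
  assumes d: "d > 0" and X: "X \<subseteq> {0..<m}"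
  shows "(\<Sum>i<d ^ m. \<Sum>i'<d ^ m. F (proj d (sl X) i) (proj d (sl ({0..<m} - X)) i)
                                (proj d (sl X) i') (proj d (sl ({0..<m} - X)) i')) =
    (\<Sum>x<d ^ card X. \<Sum>y<d ^ (m - card X). \<Sum>x'<d ^ card X. \<Sum>y'<d ^ (m - card X). F x y x' y')"
proof -
  have "(\<Sum>i<d ^ m. \<Sum>i'<d ^ m. F (proj d (sl X) i) (proj d (sl ({0..<m} - X)) i)
                                (proj d (sl X) i') (proj d (sl ({0..<m} - X)) i')) =
     (\<Sum>i<d ^ m. \<Sum>x'<d ^ card X. \<Sum>y'<d ^ (m - card X). F (proj d (sl X) i) (proj d (sl ({0..<m} - X)) i) x' y')"
    by (rule sum.cong[OF refl], rule reindex[OF d X])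
  also have "\<dots> = (\<Sum>x<d ^ card X. \<Sum>y<d ^ (m - card X). \<Sum>x'<d ^ card X. \<Sum>y'<d ^ (m - card X). F x y x' y')"
    by (rule reindex[OF d X])
  finally show ?thesis .
qed

lemma rho_phi: assumes d: "d > 0" and X: "X \<subseteq> {0..<m}" and i: "i < d ^ m" and i': "i' < d ^ m"
  shows "\<rho> $$ (i,i') = \<rho> $$ (phi d m X (proj d (sl X) i) (proj d (sl ({0..<m} - X)) i),
                             phi d m X (proj d (sl X) i') (proj d (sl ({0..<m} - X)) i'))"
  using phi_proj[OF d X i] phi_proj[OF d X i'] by simp

lemma collapse4:
  fixes f :: "nat \<Rightarrow> nat \<Rightarrow> nat \<Rightarrow> nat \<Rightarrow> 'a::comm_monoid_add"
  assumes a: "a < A" and b: "b < A"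
  shows "(\<Sum>x<A. \<Sum>y<C. \<Sum>x'<A. \<Sum>y'<C. if x = a \<and> x' = b \<and> y = y' then f x y x' y' else 0) =
    (\<Sum>y<C. f a y b y)"
proof -
  have "(\<Sum>x<A. \<Sum>y<C. \<Sum>x'<A. \<Sum>y'<C. if x = a \<and> x' = b \<and> y = y' then f x y x' y' else 0) =
        (\<Sum>x<A. \<Sum>y<C. \<Sum>x'<A. if x = a \<and> x' = b then f x y x' y else 0)"
  proof (intro sum.cong refl)
    fix x y x' assume "y \<in> {..<C}"
    then show "(\<Sum>y'<C. if x = a \<and> x' = b \<and> y = y' then f x y x' y' else 0) = (if x = a \<and> x' = b then f x y x' y else 0)"
      by (cases "x = a \<and> x' = b", auto)
  qed
  also have "\<dots> = (\<Sum>x<A. \<Sum>y<C. if x = a then f x y b y else 0)"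
  proof (intro sum.cong refl)
    fix x y
    show "(\<Sum>x'<A. if x = a \<and> x' = b then f x y x' y else 0) = (if x = a then f x y b y else 0)"
      using b by (cases "x = a", auto)
  qed
  also have "\<dots> = (\<Sum>x<A. if x = a then (\<Sum>y<C. f x y b y) else 0)"
    by (intro sum.cong refl, auto)
  also have "\<dots> = (\<Sum>y<C. f a y b y)" using a by simp
  finally show ?thesis .
qed

lemma ptrace_alt:
  assumes d: "d > 0" and X: "X \<subseteq> {0..<m}" and a: "a < d ^ card X" and b: "b < d ^ card X"
  shows "ptrace d m X \<rho> $$ (a,b) = (\<Sum>i<d ^ m. \<Sum>i'<d ^ m.
     if proj d (sl X) i = a \<and> proj d (sl X) i' = b \<and> proj d (sl ({0..<m} - X)) i = proj d (sl ({0..<m} - X)) i'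
     then \<rho> $$ (i,i') else 0)"
proof -
  let ?P = "proj d (sl X)" and ?Q = "proj d (sl ({0..<m} - X))"
  define F where "F x y x' y' = (if x = a \<and> x' = b \<and> y = y' then \<rho> $$ (phi d m X x y, phi d m X x' y') else 0)" for x y x' y'
  have "(\<Sum>i<d ^ m. \<Sum>i'<d ^ m. if ?P i = a \<and> ?P i' = b \<and> ?Q i = ?Q i' then \<rho> $$ (i,i') else 0) =
        (\<Sum>i<d ^ m. \<Sum>i'<d ^ m. F (?P i) (?Q i) (?P i') (?Q i'))"
    unfolding F_def by (intro sum.cong refl, subst rho_phi[OF d X], auto)
  also have "\<dots> = (\<Sum>x<d ^ card X. \<Sum>y<d ^ (m - card X). \<Sum>x'<d ^ card X. \<Sum>y'<d ^ (m - card X). F x y x' y')"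
    by (rule reindex2[OF d X])
  also have "\<dots> = (\<Sum>y<d ^ (m - card X). \<rho> $$ (phi d m X a y, phi d m X b y))"
    unfolding F_def by (rule collapse4[OF a b])
  also have "\<dots> = ptrace d m X \<rho> $$ (a,b)" by (rule ptrace_index[OF d X a b, symmetric])
  finally show ?thesis by simp
qed

lemma mult_if: "(a::complex) * (if P then b else 0) = (if P then a * b else 0)" by simp

lemma ptrace_psd:
  assumes d: "d > 0" and X: "X \<subseteq> {0..<m}" and \<rho>: "psd (d ^ m) \<rho>"
  shows "psd (d ^ card X) (ptrace d m X \<rho>)"
proof -
  let ?A = "d ^ card X" and ?C = "d ^ (m - card X)" and ?D = "d ^ m"
  let ?P = "proj d (sl X)" and ?Q = "proj d (sl ({0..<m} - X))"
  let ?s = "ptrace d m X \<rho>"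
  have h\<rho>: "\<And>i j. i < ?D \<Longrightarrow> j < ?D \<Longrightarrow> \<rho> $$ (j,i) = cnj (\<rho> $$ (i,j))"
    using \<rho> unfolding psd_def hermitian_def by blast
  have pos: "\<And>v. Re (qf ?D \<rho> v) \<ge> 0" using \<rho> unfolding psd_def by blast
  have herm: "hermitian ?A ?s" unfolding hermitian_def
  proof (intro conjI allI impI)
    show "?s \<in> carrier_mat ?A ?A" by (rule ptrace_carrier[OF d X])
    fix a b assume a: "a < ?A" and b: "b < ?A"
    show "?s $$ (b,a) = cnj (?s $$ (a,b))"
      unfolding ptrace_index[OF d X a b] ptrace_index[OF d X b a] cnj_sum
      by (intro sum.cong refl, rule h\<rho>, auto intro: phi_lt[OF d X])
  qed
  have qfc: "qf ?D \<rho> (\<lambda>i. if ?Q i = c then v (?P i) else 0) =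
      (\<Sum>x<?A. \<Sum>x'<?A. cnj (v x) * \<rho> $$ (phi d m X x c, phi d m X x' c) * v x')" if c: "c < ?C" for v c
  proof -
    define F where "F x y x' y' = cnj (if y = c then v x else 0) * \<rho> $$ (phi d m X x y, phi d m X x' y') *
       (if y' = c then v x' else 0)" for x y x' y'
    have "qf ?D \<rho> (\<lambda>i. if ?Q i = c then v (?P i) else 0) = (\<Sum>i<?D. \<Sum>i'<?D. F (?P i) (?Q i) (?P i') (?Q i'))"
      unfolding qf_def F_def by (intro sum.cong refl, subst rho_phi[OF d X], auto)
    also have "\<dots> = (\<Sum>x<?A. \<Sum>y<?C. \<Sum>x'<?A. \<Sum>y'<?C. F x y x' y')" by (rule reindex2[OF d X])
    also have "\<dots> = (\<Sum>x<?A. \<Sum>y<?C. \<Sum>x'<?A. if y = c then cnj (v x) * \<rho> $$ (phi d m X x c, phi d m X x' c) * v x' else 0)"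
    proof (intro sum.cong refl)
      fix x y x' show "(\<Sum>y'<?C. F x y x' y') = (if y = c then cnj (v x) * \<rho> $$ (phi d m X x c, phi d m X x' c) * v x' else 0)"
        unfolding F_def using c by (cases "y = c", auto simp: mult_if)
    qed
    also have "\<dots> = (\<Sum>x<?A. \<Sum>x'<?A. cnj (v x) * \<rho> $$ (phi d m X x c, phi d m X x' c) * v x')"
    proof (rule sum.cong[OF refl])
      fix x
      have "(\<Sum>y<?C. \<Sum>x'<?A. if y = c then cnj (v x) * \<rho> $$ (phi d m X x c, phi d m X x' c) * v x' else 0)
        = (\<Sum>y<?C. if y = c then (\<Sum>x'<?A. cnj (v x) * \<rho> $$ (phi d m X x c, phi d m X x' c) * v x') else 0)"
        by (intro sum.cong refl, auto)
      also have "\<dots> = (\<Sum>x'<?A. cnj (v x) * \<rho> $$ (phi d m X x c, phi d m X x' c) * v x')" using c by simp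
      finally show "(\<Sum>y<?C. \<Sum>x'<?A. if y = c then cnj (v x) * \<rho> $$ (phi d m X x c, phi d m X x' c) * v x' else 0)
        = (\<Sum>x'<?A. cnj (v x) * \<rho> $$ (phi d m X x c, phi d m X x' c) * v x')" .
    qed
    finally show ?thesis .
  qed
  have "Re (qf ?A ?s v) \<ge> 0" for v
  proof -
    have "qf ?A ?s v = (\<Sum>x<?A. \<Sum>x'<?A. \<Sum>c<?C. cnj (v x) * \<rho> $$ (phi d m X x c, phi d m X x' c) * v x')"
      unfolding qf_def by (intro sum.cong refl, simp add: ptrace_index[OF d X] sum_distrib_left sum_distrib_right)
    also have "\<dots> = (\<Sum>c<?C. \<Sum>x<?A. \<Sum>x'<?A. cnj (v x) * \<rho> $$ (phi d m X x c, phi d m X x' c) * v x')"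
      by (rule sum3_swap)
    also have "\<dots> = (\<Sum>c<?C. qf ?D \<rho> (\<lambda>i. if ?Q i = c then v (?P i) else 0))"
      by (intro sum.cong refl, rule qfc[symmetric], auto)
    finally have "Re (qf ?A ?s v) = (\<Sum>c<?C. Re (qf ?D \<rho> (\<lambda>i. if ?Q i = c then v (?P i) else 0)))" by simp
    also have "\<dots> \<ge> 0" by (intro sum_nonneg pos)
    finally show ?thesis .
  qed
  with herm show ?thesis unfolding psd_def by auto
qed

lemma ptrace_tr:
  assumes d: "d > 0" and X: "X \<subseteq> {0..<m}"
  shows "tr (d ^ card X) (ptrace d m X \<rho>) = tr (d ^ m) \<rho>"
proof -
  let ?A = "d ^ card X" and ?C = "d ^ (m - card X)" and ?D = "d ^ m"
  let ?P = "proj d (sl X)" and ?Q = "proj d (sl ({0..<m} - X))"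
  have "tr ?A (ptrace d m X \<rho>) = (\<Sum>a<?A. \<Sum>c<?C. \<rho> $$ (phi d m X a c, phi d m X a c))"
    unfolding tr_def by (intro sum.cong refl, rule ptrace_index[OF d X], auto)
  also have "\<dots> = (\<Sum>i<?D. \<rho> $$ (phi d m X (?P i) (?Q i), phi d m X (?P i) (?Q i)))"
    by (rule reindex[OF d X, symmetric])
  also have "\<dots> = tr ?D \<rho>" unfolding tr_def by (intro sum.cong refl, simp add: phi_proj[OF d X])
  finally show ?thesis .
qed

lemma ptrace_density:
  assumes d: "d > 0" and X: "X \<subseteq> {0..<m}" and \<rho>: "density_op (d ^ m) \<rho>"
  shows "density_op (d ^ card X) (ptrace d m X \<rho>)"
  using ptrace_psd[OF d X density_psd(1)[OF \<rho>]] ptrace_tr[OF d X, of \<rho>] density_psd(2)[OF \<rho>]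
  by (intro psd_density, auto)

lemma ptrace_full:
  assumes d: "d > 0" and \<rho>: "\<rho> \<in> carrier_mat (d ^ m) (d ^ m)"
  shows "ptrace d m {0..<m} \<rho> = \<rho>"
proof -
  have X: "{0..<m} \<subseteq> {0..<m}" by simp
  have phi0: "phi d m {0..<m} a 0 = a" if a: "a < d ^ m" for a
  proof -
    have "proj d (sl {0..<m}) (phi d m {0..<m} a 0) = a" using proj_phi1[OF d X, of a 0] a by simp
    moreover have "proj d (sl {0..<m}) (phi d m {0..<m} a 0) = phi d m {0..<m} a 0"
      using proj_upt[OF d phi_lt[OF d X]] by simp
    ultimately show ?thesis by simp
  qed
  show ?thesis
  proof (rule eq_matI)
    fix a b assume "a < dim_row \<rho>" "b < dim_col \<rho>"
    then have a: "a < d ^ card {0..<m}" and b: "b < d ^ card {0..<m}" using \<rho> by auto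
    show "ptrace d m {0..<m} \<rho> $$ (a,b) = \<rho> $$ (a,b)"
      unfolding ptrace_index[OF d X a b] using a b by (simp add: phi0)
  qed (insert \<rho> ptrace_carrier[OF d X, of \<rho>], auto)
qed

lemma proj_eq_set: assumes d: "d > 0" and S: "finite S"
  shows "proj d (sl S) i = proj d (sl S) j \<longleftrightarrow> (\<forall>t\<in>S. dig d t i = dig d t j)"
  unfolding proj_eq_iff[OF d] using S by (metis in_set_conv_nth set_sorted_list_of_set)

lemma sl_image: assumes Z: "finite Z" and Y: "Y' \<subseteq> {..<card Z}"
  shows "sl ((!) (sl Z) ` Y') = map ((!) (sl Z)) (sl Y')"
proof -
  have fY: "finite Y'" using Y finite_subset by blast
  have inj: "inj_on ((!) (sl Z)) {..<card Z}" using Z by (auto simp: inj_on_def nth_eq_iff_index_eq)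
  have "sorted_wrt (<) (map ((!) (sl Z)) (sl Y'))"
    unfolding sorted_wrt_map
  proof (rule sorted_wrt_mono_rel[OF _ strict_sorted_list_of_set])
    fix x y assume "x \<in> set (sl Y')" "y \<in> set (sl Y')" "x < y"
    then have "x < card Z" "y < card Z" "x < y" using fY Y by auto
    then show "sl Z ! x < sl Z ! y" using Z strict_sorted_list_of_set[of Z]
      by (metis length_sorted_list_of_set sorted_wrt_nth_less)
  qed
  moreover have "set (map ((!) (sl Z)) (sl Y')) = (!) (sl Z) ` Y'" using fY by simp
  moreover have "length (map ((!) (sl Z)) (sl Y')) = card ((!) (sl Z) ` Y')"
    using fY card_image[OF inj_on_subset[OF inj Y]] by simp
  ultimately show ?thesis using fY by (metis finite_imageI sorted_list_of_set_unique)
qed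

lemma sum_swap4: "(\<Sum>w\<in>A. \<Sum>w'\<in>B. \<Sum>i\<in>C. \<Sum>i'\<in>D. f w w' i i') = (\<Sum>i\<in>C. \<Sum>i'\<in>D. \<Sum>w\<in>A. \<Sum>w'\<in>B. f w w' i i')"
proof -
  have "(\<Sum>w\<in>A. \<Sum>w'\<in>B. \<Sum>i\<in>C. \<Sum>i'\<in>D. f w w' i i') = (\<Sum>w\<in>A. \<Sum>i\<in>C. \<Sum>i'\<in>D. \<Sum>w'\<in>B. f w w' i i')"
    by (rule sum.cong[OF refl], subst sum.swap, rule sum.cong[OF refl], rule sum.swap)
  also have "\<dots> = (\<Sum>i\<in>C. \<Sum>w\<in>A. \<Sum>i'\<in>D. \<Sum>w'\<in>B. f w w' i i')" by (rule sum.swap)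
  also have "\<dots> = (\<Sum>i\<in>C. \<Sum>i'\<in>D. \<Sum>w\<in>A. \<Sum>w'\<in>B. f w w' i i')" by (rule sum.cong[OF refl], rule sum.swap)
  finally show ?thesis .
qed

lemma collapse1:
  fixes g :: "complex" and W :: nat
  assumes "p' < W"
  shows "(\<Sum>w'<W. if P w' \<and> p' = w' then g else 0) = (if P p' then g else 0)"
proof -
  have "(\<Sum>w'<W. if P w' \<and> p' = w' then g else 0) = (\<Sum>w'<W. if p' = w' then (if P w' then g else 0) else 0)"
    by (rule sum.cong, auto)
  also have "\<dots> = (if p' \<in> {..<W} then (if P p' then g else 0) else 0)"
    by (rule sum.delta'[OF finite_lessThan])
  finally show ?thesis using assms by simp
qed

lemma collapse2:
  fixes g :: "complex" and W :: nat
  assumes "p < W" "p' < W"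
  shows "(\<Sum>w<W. \<Sum>w'<W. if P w w' \<and> p = w \<and> p' = w' then g else 0) = (if P p p' then g else 0)"
proof -
  have "(\<Sum>w<W. \<Sum>w'<W. if P w w' \<and> p = w \<and> p' = w' then g else 0) =
        (\<Sum>w<W. if p = w then (if P w p' then g else 0) else 0)"
  proof (rule sum.cong[OF refl])
    fix w show "(\<Sum>w'<W. if P w w' \<and> p = w \<and> p' = w' then g else 0) = (if p = w then (if P w p' then g else 0) else 0)"
      using assms collapse1[of p' W "P w" g] by (cases "p = w", auto)
  qed
  also have "\<dots> = (if p \<in> {..<W} then (if P p p' then g else 0) else 0)"
    by (rule sum.delta'[OF finite_lessThan])
  finally show ?thesis using assms by simp
qed

lemma sum_if_const: "(if P then (\<Sum>i\<in>A. \<Sum>i'\<in>B. if Q i i' then g i i' else 0) else 0) =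
   (\<Sum>i\<in>A. \<Sum>i'\<in>B. if P \<and> Q i i' then g i i' else (0::complex))"
  by (cases P, auto)

lemma compose:
  assumes d: "d > 0" and Z: "Z \<subseteq> {0..<m}" and Y': "Y' \<subseteq> {0..<card Z}"
  shows "ptrace d (card Z) Y' (ptrace d m Z \<rho>) = ptrace d m ((!) (sl Z) ` Y') \<rho>"
proof -
  define zs where "zs = sl Z"
  define Y where "Y = (!) zs ` Y'"
  have fZ: "finite Z" using Z finite_subset by blast
  have fY': "finite Y'" using Y' finite_subset by blast
  have lzs: "length zs = card Z" "distinct zs" "set zs = Z" unfolding zs_def using fZ by auto
  have inj: "inj_on ((!) zs) {..<card Z}" using lzs by (auto simp: inj_on_def nth_eq_iff_index_eq)
  have Y'l: "Y' \<subseteq> {..<card Z}" using Y' by auto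
  have cardY: "card Y = card Y'" unfolding Y_def using card_image[OF inj_on_subset[OF inj Y'l]] .
  have YZ: "Y \<subseteq> Z" unfolding Y_def using Y' lzs by auto
  have Ym: "Y \<subseteq> {0..<m}" using YZ Z by auto
  have fY: "finite Y" using Ym finite_subset by blast
  have slY: "sl Y = map ((!) zs) (sl Y')" unfolding Y_def zs_def by (rule sl_image[OF fZ Y'l])
  have imgc: "(!) zs ` ({0..<card Z} - Y') = Z - Y"
  proof -
    have "(!) zs ` ({0..<card Z} - Y') = (!) zs ` {0..<card Z} - (!) zs ` Y'"
      by (rule inj_on_image_set_diff[OF inj], insert Y', auto)
    also have "(!) zs ` {0..<card Z} = set zs" unfolding lzs(1)[symmetric] by (auto simp: in_set_conv_nth)
    also have "set zs = Z" by (rule lzs(3))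
    finally show ?thesis unfolding Y_def .
  qed
  let ?W = "d ^ card Z" and ?D = "d ^ m"
  let ?E = "\<lambda>i i'. proj d (sl ({0..<m} - Z)) i = proj d (sl ({0..<m} - Z)) i'"
  have cond: "(proj d (sl Y') (proj d zs i) = a \<and> proj d (sl Y') (proj d zs i') = b \<and>
      proj d (sl ({0..<card Z} - Y')) (proj d zs i) = proj d (sl ({0..<card Z} - Y')) (proj d zs i') \<and> ?E i i')
    \<longleftrightarrow> (proj d (sl Y) i = a \<and> proj d (sl Y) i' = b \<and> proj d (sl ({0..<m} - Y)) i = proj d (sl ({0..<m} - Y)) i')"
    for i i' a b
  proof -
    have q: "\<forall>q\<in>set (sl Y'). q < length zs" using fY' Y' lzs by auto
    have p1: "proj d (sl Y') (proj d zs i) = proj d (sl Y) i" for i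
      unfolding slY by (rule proj_map[OF d q])
    have e1: "proj d (sl ({0..<card Z} - Y')) (proj d zs i) = proj d (sl ({0..<card Z} - Y')) (proj d zs i')
        \<longleftrightarrow> (\<forall>t\<in>Z - Y. dig d t i = dig d t i')"
    proof -
      have "proj d (sl ({0..<card Z} - Y')) (proj d zs i) = proj d (sl ({0..<card Z} - Y')) (proj d zs i')
         \<longleftrightarrow> (\<forall>q\<in>{0..<card Z} - Y'. dig d q (proj d zs i) = dig d q (proj d zs i'))"
        by (rule proj_eq_set[OF d], auto)
      also have "\<dots> \<longleftrightarrow> (\<forall>q\<in>{0..<card Z} - Y'. dig d (zs ! q) i = dig d (zs ! q) i')"
        using lzs by (auto simp: dig_proj[OF d])
      also have "\<dots> \<longleftrightarrow> (\<forall>t\<in>(!) zs ` ({0..<card Z} - Y'). dig d t i = dig d t i')" by auto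
      finally show ?thesis unfolding imgc .
    qed
    have e2: "?E i i' \<longleftrightarrow> (\<forall>t\<in>{0..<m} - Z. dig d t i = dig d t i')"
      by (rule proj_eq_set[OF d], auto)
    have e3: "proj d (sl ({0..<m} - Y)) i = proj d (sl ({0..<m} - Y)) i' \<longleftrightarrow> (\<forall>t\<in>{0..<m} - Y. dig d t i = dig d t i')"
      by (rule proj_eq_set[OF d], auto)
    have "{0..<m} - Y = (Z - Y) \<union> ({0..<m} - Z)" using YZ Z by auto
    then show ?thesis unfolding p1 e1 e2 e3 by auto
  qed
  show ?thesis
  proof (rule eq_matI)
    fix a b assume "a < dim_row (ptrace d m ((!) (sl Z) ` Y') \<rho>)" "b < dim_col (ptrace d m ((!) (sl Z) ` Y') \<rho>)"
    then have a: "a < d ^ card Y'" and b: "b < d ^ card Y'"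
      using ptrace_carrier[OF d Ym, of \<rho>] cardY unfolding Y_def zs_def by auto
    have Y'Z: "Y' \<subseteq> {0..<card Z}" by fact
    let ?C1 = "\<lambda>w w'. proj d (sl Y') w = a \<and> proj d (sl Y') w' = b \<and>
      proj d (sl ({0..<card Z} - Y')) w = proj d (sl ({0..<card Z} - Y')) w'"
    have "ptrace d (card Z) Y' (ptrace d m Z \<rho>) $$ (a,b) =
       (\<Sum>w<?W. \<Sum>w'<?W. if ?C1 w w' then ptrace d m Z \<rho> $$ (w,w') else 0)"
      by (rule ptrace_alt[OF d Y'Z a b])
    also have "\<dots> = (\<Sum>w<?W. \<Sum>w'<?W. \<Sum>i<?D. \<Sum>i'<?D.
        if ?C1 w w' \<and> proj d zs i = w \<and> proj d zs i' = w' \<and> ?E i i' then \<rho> $$ (i,i') else 0)"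
    proof (intro sum.cong refl)
      fix w w' assume w: "w \<in> {..<?W}" and w': "w' \<in> {..<?W}"
      show "(if ?C1 w w' then ptrace d m Z \<rho> $$ (w,w') else 0) = (\<Sum>i<?D. \<Sum>i'<?D.
        if ?C1 w w' \<and> proj d zs i = w \<and> proj d zs i' = w' \<and> ?E i i' then \<rho> $$ (i,i') else 0)"
      proof -
        have "ptrace d m Z \<rho> $$ (w,w') = (\<Sum>i<?D. \<Sum>i'<?D. if proj d zs i = w \<and> proj d zs i' = w' \<and> ?E i i' then \<rho> $$ (i,i') else 0)"
          unfolding zs_def using w w' lzs by (intro ptrace_alt[OF d Z], auto simp: zs_def)
        then show ?thesis by (simp only: sum_if_const)
      qed
    qed
    also have "\<dots> = (\<Sum>i<?D. \<Sum>i'<?D. \<Sum>w<?W. \<Sum>w'<?W.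
        if (?C1 w w' \<and> ?E i i') \<and> proj d zs i = w \<and> proj d zs i' = w' then \<rho> $$ (i,i') else 0)"
      by (subst sum_swap4, intro sum.cong refl, auto)
    also have "\<dots> = (\<Sum>i<?D. \<Sum>i'<?D. if ?C1 (proj d zs i) (proj d zs i') \<and> ?E i i' then \<rho> $$ (i,i') else 0)"
      by (intro sum.cong refl collapse2, insert proj_lt[OF d, of zs] lzs, auto)
    also have "\<dots> = (\<Sum>i<?D. \<Sum>i'<?D. if proj d (sl Y) i = a \<and> proj d (sl Y) i' = b \<and>
        proj d (sl ({0..<m} - Y)) i = proj d (sl ({0..<m} - Y)) i' then \<rho> $$ (i,i') else 0)"
      by (intro sum.cong refl, unfold cond[symmetric], auto)
    also have "\<dots> = ptrace d m Y \<rho> $$ (a,b)"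
      using cardY a b by (intro ptrace_alt[OF d Ym, symmetric], auto)
    finally show "ptrace d (card Z) Y' (ptrace d m Z \<rho>) $$ (a,b) = ptrace d m ((!) (sl Z) ` Y') \<rho> $$ (a,b)"
      unfolding Y_def zs_def .
  qed (insert cardY, auto simp: ptrace_def Let_def Y_def zs_def)
qed

lemma compl_compl: "X \<subseteq> {0..<m} \<Longrightarrow> {0..<m} - ({0..<m} - X) = X" by auto

lemma sum_pair: "(\<Sum>ac\<in>A \<times> B. f ac) = (\<Sum>a\<in>A. \<Sum>c\<in>B. f (a,c))"
  by (simp add: sum.cartesian_product)

lemma marg_ident:
  assumes d: "d > 0" and X: "X \<subseteq> {0..<m}" and W: "unitary (d ^ (m - card X)) W"
  shows "(\<Sum>c<d ^ (m - card X). qf (d ^ m) \<sigma> (\<lambda>i. V $$ (proj d (sl X) i, a) * W $$ (proj d (sl ({0..<m} - X)) i, c)))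
       = qf (d ^ card X) (ptrace d m X \<sigma>) (\<lambda>x. V $$ (x, a))"
proof -
  let ?A = "d ^ card X" and ?C = "d ^ (m - card X)" and ?D = "d ^ m"
  let ?P = "proj d (sl X)" and ?Q = "proj d (sl ({0..<m} - X))"
  let ?s = "\<lambda>x y x' y'. \<sigma> $$ (phi d m X x y, phi d m X x' y')"
  have "(\<Sum>c<?C. qf ?D \<sigma> (\<lambda>i. V $$ (?P i, a) * W $$ (?Q i, c))) =
     (\<Sum>c<?C. \<Sum>x<?A. \<Sum>y<?C. \<Sum>x'<?A. \<Sum>y'<?C.
        cnj (V $$ (x, a) * W $$ (y, c)) * ?s x y x' y' * (V $$ (x', a) * W $$ (y', c)))"
  proof (rule sum.cong[OF refl])
    fix c
    show "qf ?D \<sigma> (\<lambda>i. V $$ (?P i, a) * W $$ (?Q i, c)) = (\<Sum>x<?A. \<Sum>y<?C. \<Sum>x'<?A. \<Sum>y'<?C.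
        cnj (V $$ (x, a) * W $$ (y, c)) * ?s x y x' y' * (V $$ (x', a) * W $$ (y', c)))"
      unfolding qf_def
      by (subst reindex2[OF d X, symmetric], intro sum.cong refl, subst rho_phi[OF d X], auto)
  qed
  also have "\<dots> = (\<Sum>x<?A. \<Sum>y<?C. \<Sum>x'<?A. \<Sum>y'<?C. \<Sum>c<?C.
        cnj (V $$ (x, a)) * ?s x y x' y' * V $$ (x', a) * (W $$ (y', c) * cnj (W $$ (y, c))))"
    by (subst sum.swap, rule sum.cong[OF refl], subst sum.swap, rule sum.cong[OF refl],
        subst sum.swap, rule sum.cong[OF refl], subst sum.swap, rule sum.cong[OF refl], simp add: ac_simps)
  also have "\<dots> = (\<Sum>x<?A. \<Sum>y<?C. \<Sum>x'<?A. \<Sum>y'<?C.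
        cnj (V $$ (x, a)) * ?s x y x' y' * V $$ (x', a) * (if y' = y then 1 else 0))"
    by (intro sum.cong refl, simp add: sum_distrib_left[symmetric] unitary_compl[OF W])
  also have "\<dots> = (\<Sum>x<?A. \<Sum>y<?C. \<Sum>x'<?A. cnj (V $$ (x, a)) * ?s x y x' y * V $$ (x', a))"
    by (intro sum.cong refl, simp add: if_distrib cong: if_cong)
  also have "\<dots> = (\<Sum>x<?A. \<Sum>x'<?A. \<Sum>y<?C. cnj (V $$ (x, a)) * ?s x y x' y * V $$ (x', a))"
    by (rule sum.cong[OF refl], rule sum.swap)
  also have "\<dots> = qf ?A (ptrace d m X \<sigma>) (\<lambda>x. V $$ (x, a))"
    unfolding qf_def by (intro sum.cong refl, simp add: ptrace_index[OF d X] sum_distrib_left sum_distrib_right)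
  finally show ?thesis .
qed

lemma phi_compl: assumes X: "X \<subseteq> {0..<m}"
  shows "phi d m ({0..<m} - X) c a = phi d m X a c"
  unfolding phi_def compl_compl[OF X] by simp

lemma proj_compl: assumes X: "X \<subseteq> {0..<m}"
  shows "proj d (sl ({0..<m} - ({0..<m} - X))) = proj d (sl X)"
  unfolding compl_compl[OF X] ..

lemma subadd_bip:
  assumes d: "d > 0" and X: "X \<subseteq> {0..<m}" and \<sigma>: "density_op (d ^ m) \<sigma>"
  shows "vn_entropy \<sigma> \<le> marg_entropy d m X \<sigma> + marg_entropy d m ({0..<m} - X) \<sigma>"
proof -
  let ?A = "d ^ card X" and ?C = "d ^ (m - card X)" and ?D = "d ^ m"
  let ?P = "proj d (sl X)" and ?Q = "proj d (sl ({0..<m} - X))"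
  let ?Y = "{0..<m} - X"
  have Y: "?Y \<subseteq> {0..<m}" by auto
  have cY: "card ?Y = m - card X" by (rule card_compl[OF X])
  have "card X \<le> m" using card_mono[OF finite_atLeastLessThan X] by simp
  then have cYY: "m - card ?Y = card X" using cY by simp
  have sX: "density_op ?A (ptrace d m X \<sigma>)" by (rule ptrace_density[OF d X \<sigma>])
  have sY: "density_op ?C (ptrace d m ?Y \<sigma>)" using ptrace_density[OF d Y \<sigma>] unfolding cY .
  obtain V al where V: "unitary ?A V" and sXe: "ptrace d m X \<sigma> = V * dmat ?A al * adj V"
    and al0: "\<forall>k<?A. al k \<ge> 0" and trX: "tr ?A (ptrace d m X \<sigma>) = complex_of_real (\<Sum>k<?A. al k)"
    using psd_spectral[OF density_psd(1)[OF sX]] by blast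
  obtain W be where W: "unitary ?C W" and sYe: "ptrace d m ?Y \<sigma> = W * dmat ?C be * adj W"
    and be0: "\<forall>k<?C. be k \<ge> 0" and trY: "tr ?C (ptrace d m ?Y \<sigma>) = complex_of_real (\<Sum>k<?C. be k)"
    using psd_spectral[OF density_psd(1)[OF sY]] by blast
  have alsum: "(\<Sum>k<?A. al k) = 1" using trX density_psd(2)[OF sX] by (metis of_real_eq_1_iff)
  define u where "u ac i = V $$ (?P i, fst ac) * W $$ (?Q i, snd ac)" for ac i
  define p where "p a c = Re (qf ?D \<sigma> (u (a,c)))" for a c
  have m1: "(\<Sum>c<?C. qf ?D \<sigma> (u (a,c))) = complex_of_real (al a)" if a: "a < ?A" for a
    unfolding u_def fst_conv snd_conv marg_ident[OF d X W] sXe qf_UDU_col[OF V a] ..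
  have m2: "(\<Sum>a<?A. qf ?D \<sigma> (u (a,c))) = complex_of_real (be c)" if c: "c < ?C" for c
  proof -
    have V': "unitary (d ^ (m - card ?Y)) V" using V unfolding cYY .
    have "(\<Sum>a<?A. qf ?D \<sigma> (u (a,c))) =
       (\<Sum>a<d ^ (m - card ?Y). qf ?D \<sigma> (\<lambda>i. W $$ (proj d (sl ?Y) i, c) * V $$ (proj d (sl ({0..<m} - ?Y)) i, a)))"
      unfolding cYY u_def proj_compl[OF X] by (simp add: ac_simps)
    also have "\<dots> = qf (d ^ card ?Y) (ptrace d m ?Y \<sigma>) (\<lambda>x. W $$ (x, c))"
      by (rule marg_ident[OF d Y V'])
    also have "\<dots> = complex_of_real (be c)" unfolding cY sYe by (rule qf_UDU_col[OF W c])
    finally show ?thesis .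
  qed
  have p0: "p a c \<ge> 0" for a c
    using density_psd(1)[OF \<sigma>] unfolding psd_def p_def by auto
  have pa: "(\<Sum>c<?C. p a c) = al a" if "a < ?A" for a
    unfolding p_def using m1[OF that] by (metis Re_complex_of_real Re_sum)
  have pc: "(\<Sum>a<?A. p a c) = be c" if "c < ?C" for c
    unfolding p_def using m2[OF that] by (metis Re_complex_of_real Re_sum)
  have ptot: "(\<Sum>a<?A. \<Sum>c<?C. p a c) = 1" using pa alsum by simp
  define I where "I = {..<?A} \<times> {..<?C}"
  have orth: "(\<Sum>i<?D. cnj (u ac i) * u ac' i) = (if ac = ac' then 1 else 0)" if "ac \<in> I" "ac' \<in> I" for ac ac'
  proof -
    obtain a c where ac1: "ac = (a,c)" by (cases ac)
    obtain a' c' where ac2: "ac' = (a',c')" by (cases ac')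
    have ac: "ac = (a,c)" "ac' = (a',c')" "a < ?A" "c < ?C" "a' < ?A" "c' < ?C"
      using that ac1 ac2 unfolding I_def by auto
    have "(\<Sum>i<?D. cnj (u ac i) * u ac' i) =
        (\<Sum>x<?A. \<Sum>y<?C. cnj (V $$ (x, a) * W $$ (y, c)) * (V $$ (x, a') * W $$ (y, c')))"
      unfolding u_def ac fst_conv snd_conv by (rule reindex[OF d X])
    also have "\<dots> = (\<Sum>x<?A. cnj (V $$ (x, a)) * V $$ (x, a')) * (\<Sum>y<?C. cnj (W $$ (y, c)) * W $$ (y, c'))"
      by (simp add: sum_product ac_simps)
    also have "\<dots> = (if ac = ac' then 1 else 0)"
      unfolding unitary_orth[OF V ac(3,5)] unitary_orth[OF W ac(4,6)] ac by auto
    finally show ?thesis .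
  qed
  have totI: "(\<Sum>ac\<in>I. Re (qf ?D \<sigma> (u ac))) = 1"
    unfolding I_def sum_pair using ptot unfolding p_def by simp
  have "vn_entropy \<sigma> \<le> (\<Sum>ac\<in>I. eta (Re (qf ?D \<sigma> (u ac))))"
    by (rule psd_entropy_le_family[OF density_psd(1)[OF \<sigma>] density_psd(2)[OF \<sigma>] _ orth totI],
        auto simp: I_def)
  also have "\<dots> = (\<Sum>a<?A. \<Sum>c<?C. eta (p a c))"
    unfolding I_def sum_pair p_def by simp
  also have "\<dots> \<le> (\<Sum>a<?A. eta (\<Sum>c<?C. p a c)) + (\<Sum>c<?C. eta (\<Sum>a<?A. p a c))"
    by (rule classical_subadd[OF p0 ptot])
  also have "\<dots> = (\<Sum>a<?A. eta (al a)) + (\<Sum>c<?C. eta (be c))"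
    using pa pc by simp
  also have "(\<Sum>a<?A. eta (al a)) = marg_entropy d m X \<sigma>"
    unfolding marg_entropy_def by (rule vn_entropy_diag[OF V sXe, symmetric])
  also have "(\<Sum>c<?C. eta (be c)) = marg_entropy d m ?Y \<sigma>"
    unfolding marg_entropy_def by (rule vn_entropy_diag[OF W sYe, symmetric])
  finally show ?thesis .
qed

lemma subadd:
  assumes d: "d > 0" and X: "X \<subseteq> {0..<m}" and Y: "Y \<subseteq> {0..<m}" and XY: "X \<inter> Y = {}"
    and \<rho>: "density_op (d ^ m) \<rho>"
  shows "marg_entropy d m (X \<union> Y) \<rho> \<le> marg_entropy d m X \<rho> + marg_entropy d m Y \<rho>"
proof -
  define Z where "Z = X \<union> Y"
  define zs where "zs = sl Z"
  have Zm: "Z \<subseteq> {0..<m}" unfolding Z_def using X Y by auto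
  have fZ: "finite Z" using Zm finite_subset by blast
  have lzs: "length zs = card Z" "distinct zs" "set zs = Z" unfolding zs_def using fZ by auto
  define X' where "X' = {q. q < card Z \<and> zs ! q \<in> X}"
  have X'Z: "X' \<subseteq> {0..<card Z}" unfolding X'_def by auto
  have imgX: "(!) zs ` X' = X"
  proof
    show "(!) zs ` X' \<subseteq> X" unfolding X'_def by auto
    show "X \<subseteq> (!) zs ` X'"
    proof
      fix t assume t: "t \<in> X"
      then have "t \<in> set zs" using lzs unfolding Z_def by auto
      then obtain q where "q < length zs" "zs ! q = t" by (auto simp: in_set_conv_nth)
      then show "t \<in> (!) zs ` X'" unfolding X'_def using t lzs by auto
    qed
  qed
  have imgY: "(!) zs ` ({0..<card Z} - X') = Y"
  proof
    show "(!) zs ` ({0..<card Z} - X') \<subseteq> Y"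
    proof
      fix t assume "t \<in> (!) zs ` ({0..<card Z} - X')"
      then obtain q where q: "q < card Z" "q \<notin> X'" "t = zs ! q" by auto
      then have "t \<in> Z" "t \<notin> X" using lzs unfolding X'_def by auto
      then show "t \<in> Y" unfolding Z_def by auto
    qed
    show "Y \<subseteq> (!) zs ` ({0..<card Z} - X')"
    proof
      fix t assume t: "t \<in> Y"
      then have "t \<in> set zs" using lzs unfolding Z_def by auto
      then obtain q where "q < length zs" "zs ! q = t" by (auto simp: in_set_conv_nth)
      then show "t \<in> (!) zs ` ({0..<card Z} - X')" unfolding X'_def using t lzs XY by force
    qed
  qed
  define \<tau> where "\<tau> = ptrace d m Z \<rho>"
  have \<tau>: "density_op (d ^ card Z) \<tau>" unfolding \<tau>_def by (rule ptrace_density[OF d Zm \<rho>])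
  have "vn_entropy \<tau> \<le> marg_entropy d (card Z) X' \<tau> + marg_entropy d (card Z) ({0..<card Z} - X') \<tau>"
    by (rule subadd_bip[OF d X'Z \<tau>])
  also have "marg_entropy d (card Z) X' \<tau> = marg_entropy d m X \<rho>"
    unfolding marg_entropy_def \<tau>_def compose[OF d Zm X'Z] zs_def[symmetric] imgX ..
  also have "marg_entropy d (card Z) ({0..<card Z} - X') \<tau> = marg_entropy d m Y \<rho>"
    unfolding marg_entropy_def \<tau>_def compose[OF d Zm Diff_subset[of "{0..<card Z}" X']] zs_def[symmetric] imgY ..
  finally show ?thesis unfolding \<tau>_def marg_entropy_def Z_def .
qed

lemma vn_entropy_transpose: "A \<in> carrier_mat n n \<Longrightarrow> vn_entropy (transpose_mat A) = vn_entropy A"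
  by (rule vn_entropy_char_poly, rule char_poly_transpose_mat)

lemma pure_marg:
  assumes d: "d > 0" and X: "X \<subseteq> {0..<m}" and Psi: "Psi \<in> carrier_mat (d ^ m) 1"
    and t: "tr (d ^ m) (Psi * adj Psi) = 1"
  shows "marg_entropy d m X (Psi * adj Psi) = marg_entropy d m ({0..<m} - X) (Psi * adj Psi)"
proof -
  let ?A = "d ^ card X" and ?C = "d ^ (m - card X)" and ?D = "d ^ m" and ?Y = "{0..<m} - X"
  let ?\<tau> = "Psi * adj Psi"
  have Y: "?Y \<subseteq> {0..<m}" by auto
  have cY: "card ?Y = m - card X" by (rule card_compl[OF X])
  have "card X \<le> m" using card_mono[OF finite_atLeastLessThan X] by simp
  then have cYY: "m - card ?Y = card X" using cY by simp
  have \<tau>e: "?\<tau> $$ (i,j) = Psi $$ (i,0) * cnj (Psi $$ (j,0))" if "i < ?D" "j < ?D" for i j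
    using multadj_index[OF Psi Psi that] by simp
  define N where "N = mat ?A ?C (\<lambda>(a,c). Psi $$ (phi d m X a c, 0))"
  have N: "N \<in> carrier_mat ?A ?C" unfolding N_def by simp
  have sX: "ptrace d m X ?\<tau> = N * adj N"
  proof (rule eq_matI)
    fix a b assume "a < dim_row (N * adj N)" "b < dim_col (N * adj N)"
    then have a: "a < ?A" and b: "b < ?A" using N by auto
    show "ptrace d m X ?\<tau> $$ (a,b) = (N * adj N) $$ (a,b)"
      unfolding ptrace_index[OF d X a b] multadj_index[OF N N a b]
      using a b by (intro sum.cong refl, simp add: \<tau>e phi_lt[OF d X] N_def)
  qed (insert N ptrace_carrier[OF d X], auto)
  have sY: "ptrace d m ?Y ?\<tau> = transpose_mat (adj N * N)"
  proof (rule eq_matI)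
    fix c c' assume "c < dim_row (transpose_mat (adj N * N))" "c' < dim_col (transpose_mat (adj N * N))"
    then have c: "c < ?C" and c': "c' < ?C" using N by auto
    have c1: "c < d ^ card ?Y" and c1': "c' < d ^ card ?Y" using c c' cY by auto
    have "transpose_mat (adj N * N) $$ (c,c') = (adj N * N) $$ (c',c)" using c c' N by simp
    also have "\<dots> = (\<Sum>l<?A. cnj (N $$ (l,c')) * N $$ (l,c))" by (rule adjmult_index[OF N N c' c])
    finally have tr1: "transpose_mat (adj N * N) $$ (c,c') = (\<Sum>l<?A. cnj (N $$ (l,c')) * N $$ (l,c))" .
    show "ptrace d m ?Y ?\<tau> $$ (c,c') = transpose_mat (adj N * N) $$ (c,c')"
      unfolding ptrace_index[OF d Y c1 c1'] cYY tr1 using c c'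
      by (intro sum.cong refl, simp add: phi_compl[OF X] \<tau>e phi_lt[OF d X] N_def mult.commute)
  qed (insert N ptrace_carrier[OF d Y] cY, auto)
  have tN: "tr ?A (N * adj N) = 1" using ptrace_tr[OF d X, of ?\<tau>] t unfolding sX by simp
  have "marg_entropy d m X ?\<tau> = vn_entropy (N * adj N)" unfolding marg_entropy_def sX ..
  also have "\<dots> = vn_entropy (adj N * N)" by (rule pure_eq[OF N tN])
  also have "\<dots> = vn_entropy (transpose_mat (adj N * N))"
    by (rule vn_entropy_transpose[symmetric], insert N, auto)
  also have "\<dots> = marg_entropy d m ?Y ?\<tau>" unfolding marg_entropy_def sY ..
  finally show ?thesis .
qed

lemma trailing:
  assumes d: "d > 0" and Y: "Y \<subseteq> {0..<m}" and mk: "m \<le> M"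
  shows "ptrace d m Y (ptrace d M {0..<m} \<tau>) = ptrace d M Y \<tau>"
proof -
  have Z: "{0..<m} \<subseteq> {0..<M}" using mk by auto
  have "ptrace d (card {0..<m}) Y (ptrace d M {0..<m} \<tau>) = ptrace d M ((!) (sl {0..<m}) ` Y) \<tau>"
    by (rule compose[OF d Z], insert Y, auto)
  moreover have "(!) (sl {0..<m}) ` Y = Y" using Y by (force simp: image_def)
  ultimately show ?thesis by simp
qed

lemma unitary_one: "unitary n (1\<^sub>m n)"
proof -
  have "adj (1\<^sub>m n) = 1\<^sub>m n" by (rule eq_matI, auto)
  then show ?thesis unfolding unitary_def by simp
qed

lemma vn_entropy_dmat: "vn_entropy (dmat n l) = (\<Sum>k<n. eta (l k))"
proof -
  have "adj (1\<^sub>m n) = 1\<^sub>m n" by (rule eq_matI, auto)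
  then have "dmat n l = 1\<^sub>m n * dmat n l * adj (1\<^sub>m n)" by simp
  then show ?thesis by (rule vn_entropy_diag[OF unitary_one])
qed

lemma purification:
  assumes d: "d > 0" and \<rho>: "density_op (d ^ m) \<rho>"
  shows "\<exists>Psi. Psi \<in> carrier_mat (d ^ (2 * m)) 1 \<and> ptrace d (2 * m) {0..<m} (Psi * adj Psi) = \<rho> \<and>
     marg_entropy d (2 * m) ({0..<2 * m} - {0..<m}) (Psi * adj Psi) = vn_entropy \<rho>"
proof -
  let ?M = "2 * m" and ?X = "{0..<m}" and ?D = "d ^ m"
  have X: "?X \<subseteq> {0..<?M}" by auto
  have cX: "card ?X = m" by simp
  have cC: "?M - card ?X = m" by simp
  have cY: "card ({0..<?M} - ?X) = m" by (subst card_compl[OF X], simp)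
  obtain U l where U: "unitary ?D U" and \<rho>e: "\<rho> = U * dmat ?D l * adj U" and l0: "\<forall>k<?D. l k \<ge> 0"
    using psd_spectral[OF density_psd(1)[OF \<rho>]] by blast
  have Uc: "U \<in> carrier_mat ?D ?D" using U unfolding unitary_def by auto
  let ?P = "proj d (sl ?X)" and ?Q = "proj d (sl ({0..<?M} - ?X))"
  define Psi where "Psi = mat (d ^ ?M) 1 (\<lambda>(i,_). complex_of_real (sqrt (l (?Q i))) * U $$ (?P i, ?Q i))"
  have Psi: "Psi \<in> carrier_mat (d ^ ?M) 1" unfolding Psi_def by simp
  let ?\<tau> = "Psi * adj Psi"
  have \<tau>e: "?\<tau> $$ (i,j) = Psi $$ (i,0) * cnj (Psi $$ (j,0))" if "i < d ^ ?M" "j < d ^ ?M" for i j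
    using multadj_index[OF Psi Psi that] by simp
  have Psiphi: "Psi $$ (phi d ?M ?X a c, 0) = complex_of_real (sqrt (l c)) * U $$ (a, c)"
    if "a < ?D" "c < ?D" for a c
  proof -
    have "?P (phi d ?M ?X a c) = a" using proj_phi1[OF d X, of a c] that by simp
    moreover have "?Q (phi d ?M ?X a c) = c" using proj_phi2[OF d X, of c a] that by simp
    ultimately show ?thesis unfolding Psi_def using phi_lt[OF d X, of a c] by simp
  qed
  have sq: "complex_of_real (sqrt (l c)) * cnj (complex_of_real (sqrt (l c))) = complex_of_real (l c)"
    if "c < ?D" for c
    using l0 that by (simp flip: of_real_mult)
  have part1: "ptrace d ?M ?X ?\<tau> = \<rho>"
  proof (rule eq_matI)
    fix a b assume "a < dim_row \<rho>" "b < dim_col \<rho>"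
    then have a: "a < ?D" and b: "b < ?D" using \<rho>e Uc by auto
    have a1: "a < d ^ card ?X" and b1: "b < d ^ card ?X" using a b by auto
    have "ptrace d ?M ?X ?\<tau> $$ (a,b) = (\<Sum>c<?D. ?\<tau> $$ (phi d ?M ?X a c, phi d ?M ?X b c))"
      unfolding ptrace_index[OF d X a1 b1] cC ..
    also have "\<dots> = (\<Sum>c<?D. U $$ (a,c) * l c * cnj (U $$ (b,c)))"
    proof (intro sum.cong refl)
      fix c assume c: "c \<in> {..<?D}"
      then have "?\<tau> $$ (phi d ?M ?X a c, phi d ?M ?X b c) = Psi $$ (phi d ?M ?X a c, 0) * cnj (Psi $$ (phi d ?M ?X b c, 0))"
        by (intro \<tau>e phi_lt[OF d X])
      also have "\<dots> = (complex_of_real (sqrt (l c)) * U $$ (a, c)) * cnj (complex_of_real (sqrt (l c)) * U $$ (b, c))"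
        using a b c by (simp only: Psiphi lessThan_iff)
      also have "\<dots> = (complex_of_real (sqrt (l c)) * cnj (complex_of_real (sqrt (l c)))) * (U $$ (a,c) * cnj (U $$ (b,c)))"
        by (simp only: complex_cnj_mult ac_simps)
      also have "\<dots> = U $$ (a,c) * l c * cnj (U $$ (b,c))" using c sq by simp
      finally show "?\<tau> $$ (phi d ?M ?X a c, phi d ?M ?X b c) = U $$ (a,c) * l c * cnj (U $$ (b,c))" .
    qed
    also have "\<dots> = \<rho> $$ (a,b)" unfolding \<rho>e by (rule UDU_index[OF Uc a b, symmetric])
    finally show "ptrace d ?M ?X ?\<tau> $$ (a,b) = \<rho> $$ (a,b)" .
  qed (insert ptrace_carrier[OF d X, of ?\<tau>] \<rho>e Uc, auto)
  have Y: "{0..<?M} - ?X \<subseteq> {0..<?M}" by auto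
  have part2: "ptrace d ?M ({0..<?M} - ?X) ?\<tau> = dmat ?D l"
  proof (rule eq_matI)
    fix c c' assume "c < dim_row (dmat ?D l)" "c' < dim_col (dmat ?D l)"
    then have c: "c < ?D" and c': "c' < ?D" by auto
    have c1: "c < d ^ card ({0..<?M} - ?X)" and c1': "c' < d ^ card ({0..<?M} - ?X)" using c c' cY by auto
    have cc: "?M - card ({0..<?M} - ?X) = m" using cY by simp
    have "ptrace d ?M ({0..<?M} - ?X) ?\<tau> $$ (c,c') = (\<Sum>a<?D. ?\<tau> $$ (phi d ?M ?X a c, phi d ?M ?X a c'))"
      unfolding ptrace_index[OF d Y c1 c1'] cc phi_compl[OF X] ..
    also have "\<dots> = (\<Sum>a<?D. (complex_of_real (sqrt (l c)) * cnj (complex_of_real (sqrt (l c')))) *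
        cnj (cnj (U $$ (a,c)) * U $$ (a,c')))"
    proof (intro sum.cong refl)
      fix a assume a: "a \<in> {..<?D}"
      have "?\<tau> $$ (phi d ?M ?X a c, phi d ?M ?X a c') = Psi $$ (phi d ?M ?X a c, 0) * cnj (Psi $$ (phi d ?M ?X a c', 0))"
        by (intro \<tau>e phi_lt[OF d X])
      also have "\<dots> = (complex_of_real (sqrt (l c)) * U $$ (a, c)) * cnj (complex_of_real (sqrt (l c')) * U $$ (a, c'))"
        using a c c' by (simp only: Psiphi lessThan_iff)
      also have "\<dots> = (complex_of_real (sqrt (l c)) * cnj (complex_of_real (sqrt (l c')))) * cnj (cnj (U $$ (a,c)) * U $$ (a,c'))"
        by (simp only: complex_cnj_mult complex_cnj_cnj ac_simps)
      finally show "?\<tau> $$ (phi d ?M ?X a c, phi d ?M ?X a c') = (complex_of_real (sqrt (l c)) * cnj (complex_of_real (sqrt (l c')))) *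
        cnj (cnj (U $$ (a,c)) * U $$ (a,c'))" .
    qed
    also have "\<dots> = (complex_of_real (sqrt (l c)) * cnj (complex_of_real (sqrt (l c')))) *
        cnj (\<Sum>a<?D. cnj (U $$ (a,c)) * U $$ (a,c'))"
      by (simp add: sum_distrib_left cnj_sum)
    also have "\<dots> = dmat ?D l $$ (c,c')"
      unfolding unitary_orth[OF U c c'] using c c' sq[OF c] by (auto simp: dmat_def)
    finally show "ptrace d ?M ({0..<?M} - ?X) ?\<tau> $$ (c,c') = dmat ?D l $$ (c,c')" .
  qed (insert ptrace_carrier[OF d Y, of ?\<tau>] cY, auto)
  have "marg_entropy d ?M ({0..<?M} - ?X) ?\<tau> = vn_entropy \<rho>"
    unfolding marg_entropy_def part2 vn_entropy_dmat vn_entropy_diag[OF U \<rho>e] ..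
  then show ?thesis using Psi part1 by blast
qed

lemma araki_lieb:
  assumes d: "d > 0" and X: "X \<subseteq> {0..<m}" and \<rho>: "density_op (d ^ m) \<rho>"
  shows "marg_entropy d m X \<rho> \<le> vn_entropy \<rho> + marg_entropy d m ({0..<m} - X) \<rho>"
proof -
  let ?M = "2 * m"
  obtain Psi where Psi: "Psi \<in> carrier_mat (d ^ ?M) 1" and p1: "ptrace d ?M {0..<m} (Psi * adj Psi) = \<rho>"
    and p2: "marg_entropy d ?M ({0..<?M} - {0..<m}) (Psi * adj Psi) = vn_entropy \<rho>"
    using purification[OF d \<rho>] by blast
  let ?\<tau> = "Psi * adj Psi"
  have X0: "{0..<m} \<subseteq> {0..<?M}" by auto
  have XM: "X \<subseteq> {0..<?M}" using X by auto
  have t: "tr (d ^ ?M) ?\<tau> = 1"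
    using ptrace_tr[OF d X0, of ?\<tau>] p1 density_psd(2)[OF \<rho>] by simp
  have \<tau>: "density_op (d ^ ?M) ?\<tau>" using psd_NN[OF Psi] t by (intro psd_density)
  have mm: "m \<le> ?M" by simp
  have "marg_entropy d m X \<rho> = marg_entropy d ?M X ?\<tau>"
    unfolding marg_entropy_def p1[symmetric] trailing[OF d X mm] ..
  also have "\<dots> = marg_entropy d ?M ({0..<?M} - X) ?\<tau>" by (rule pure_marg[OF d XM Psi t])
  also have "{0..<?M} - X = ({0..<m} - X) \<union> ({0..<?M} - {0..<m})" using X by auto
  also have "marg_entropy d ?M (({0..<m} - X) \<union> ({0..<?M} - {0..<m})) ?\<tau> \<le>
      marg_entropy d ?M ({0..<m} - X) ?\<tau> + marg_entropy d ?M ({0..<?M} - {0..<m}) ?\<tau>"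
    by (rule subadd[OF d _ _ _ \<tau>], auto)
  also have "marg_entropy d ?M ({0..<m} - X) ?\<tau> = marg_entropy d m ({0..<m} - X) \<rho>"
    unfolding marg_entropy_def p1[symmetric] trailing[OF d Diff_subset mm] ..
  finally show ?thesis unfolding p2 by simp
qed

lemma subadd_iter:
  assumes d: "d > 0" and \<rho>: "density_op (d ^ m) \<rho>" and J: "finite J"
    and P: "\<And>j. j \<in> J \<Longrightarrow> P j \<subseteq> {0..<m}"
    and disj: "\<And>i j. i \<in> J \<Longrightarrow> j \<in> J \<Longrightarrow> i \<noteq> j \<Longrightarrow> P i \<inter> P j = {}"
  shows "marg_entropy d m (\<Union>j\<in>J. P j) \<rho> \<le> (\<Sum>j\<in>J. marg_entropy d m (P j) \<rho>)"
  using J P disj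
proof (induction J rule: finite_induct)
  case empty
  have e: "{} \<subseteq> {0..<m}" by simp
  have "density_op (d ^ card {}) (ptrace d m {} \<rho>)" using ptrace_density[OF d e \<rho>] by simp
  then have "vn_entropy (ptrace d m {} \<rho>) \<le> ln (real (d ^ card {}))"
    using psd_max_entropy density_psd by blast
  then show ?case unfolding marg_entropy_def by simp
next
  case (insert x F)
  have dj: "P x \<inter> (\<Union>j\<in>F. P j) = {}"
  proof -
    { fix j assume j: "j \<in> F"
      then have "x \<noteq> j" using insert.hyps by auto
      then have "P x \<inter> P j = {}" using insert.prems(2)[of x j] j by auto }
    then show ?thesis by blast
  qed
  have s1: "P x \<subseteq> {0..<m}" using insert.prems(1) by auto
  have s2: "(\<Union>j\<in>F. P j) \<subseteq> {0..<m}" using insert.prems(1) by auto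
  have "marg_entropy d m (P x \<union> (\<Union>j\<in>F. P j)) \<rho> \<le> marg_entropy d m (P x) \<rho> + marg_entropy d m (\<Union>j\<in>F. P j) \<rho>"
    by (rule subadd[OF d s1 s2 dj \<rho>])
  also have "marg_entropy d m (P x \<union> (\<Union>j\<in>F. P j)) \<rho> = marg_entropy d m (\<Union>j\<in>insert x F. P j) \<rho>" by simp
  finally have "marg_entropy d m (\<Union>j\<in>insert x F. P j) \<rho> \<le> marg_entropy d m (P x) \<rho> + marg_entropy d m (\<Union>j\<in>F. P j) \<rho>" .
  also have "marg_entropy d m (\<Union>j\<in>F. P j) \<rho> \<le> (\<Sum>j\<in>F. marg_entropy d m (P j) \<rho>)"
    by (rule insert.IH, insert insert.prems, auto)
  finally show ?case using insert.hyps by simp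
qed

lemma single_bound:
  assumes d: "d > 0" and t: "t < m" and \<rho>: "density_op (d ^ m) \<rho>"
  shows "marg_entropy d m {t} \<rho> \<le> ln (real d)"
proof -
  have e: "{t} \<subseteq> {0..<m}" using t by simp
  have "density_op (d ^ card {t}) (ptrace d m {t} \<rho>)" by (rule ptrace_density[OF d e \<rho>])
  then have "vn_entropy (ptrace d m {t} \<rho>) \<le> ln (real (d ^ card {t}))"
    using psd_max_entropy density_psd by blast
  then show ?thesis unfolding marg_entropy_def by simp
qed

theorem proposition1:
  fixes n d :: nat and \<rho> :: "complex mat" and k :: nat
  assumes "n \<ge> 1" and "d \<ge> 2"
    and "density_op (d ^ (2 * n)) \<rho>"
    and "1 \<le> k" and "k \<le> n"
  shows "nonmarkov_corr d n \<rho>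
           \<le> 2 * (\<Sum>j \<in> {1..n} - {k}. 2 * ln (real d) - markov_corr d n \<rho> j)"
proof -
  have d: "d > 0" using assms(2) by simp
  have \<rho>: "density_op (d ^ (2 * n)) \<rho>" by fact
  define P where "P j = {2 * j - 2, 2 * j - 1}" for j :: nat
  define J where "J = {1..n} - {k}"
  have Sstep: "S_step d n \<rho> j = marg_entropy d (2 * n) (P j) \<rho>" for j
    unfolding S_step_def P_def ..
  have Psub: "P j \<subseteq> {0..<2 * n}" if "j \<in> {1..n}" for j using that unfolding P_def by auto
  have Pdisj: "P i \<inter> P j = {}" if "i \<in> {1..n}" "j \<in> {1..n}" "i \<noteq> j" for i j
    using that unfolding P_def by auto
  have kin: "k \<in> {1..n}" using assms by auto
  have union: "(\<Union>j\<in>J. P j) = {0..<2 * n} - P k"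
  proof
    show "(\<Union>j\<in>J. P j) \<subseteq> {0..<2 * n} - P k"
      using Psub Pdisj kin unfolding J_def by blast
    show "{0..<2 * n} - P k \<subseteq> (\<Union>j\<in>J. P j)"
    proof
      fix t assume t: "t \<in> {0..<2 * n} - P k"
      define j where "j = t div 2 + 1"
      have tj: "t \<in> P j" unfolding P_def j_def by auto
      have "j \<in> {1..n}" unfolding j_def using t by auto
      moreover have "j \<noteq> k" using t tj by auto
      ultimately show "t \<in> (\<Union>j\<in>J. P j)" using tj unfolding J_def by auto
    qed
  qed
  have PkU: "P k \<subseteq> {0..<2 * n}" by (rule Psub[OF kin])
  have AL: "marg_entropy d (2 * n) (P k) \<rho> \<le> vn_entropy \<rho> + marg_entropy d (2 * n) ({0..<2 * n} - P k) \<rho>"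
    by (rule araki_lieb[OF d PkU \<rho>])
  have IT: "marg_entropy d (2 * n) (\<Union>j\<in>J. P j) \<rho> \<le> (\<Sum>j\<in>J. marg_entropy d (2 * n) (P j) \<rho>)"
    by (rule subadd_iter[OF d \<rho>], insert Psub Pdisj, auto simp: J_def)
  have split: "(\<Sum>j = 1..n. S_step d n \<rho> j) = S_step d n \<rho> k + (\<Sum>j\<in>J. S_step d n \<rho> j)"
    unfolding J_def by (rule sum.remove[OF _ kin], simp)
  have N: "nonmarkov_corr d n \<rho> \<le> 2 * (\<Sum>j\<in>J. S_step d n \<rho> j)"
    unfolding nonmarkov_corr_def split using AL IT unfolding union Sstep by simp
  have trm: "S_step d n \<rho> j \<le> 2 * ln (real d) - markov_corr d n \<rho> j" if j: "j \<in> J" for j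
  proof -
    have j1: "1 \<le> j" "j \<le> n" using j unfolding J_def by auto
    have "marg_entropy d (2 * n) {2 * j - 2} \<rho> \<le> ln (real d)"
      by (rule single_bound[OF d _ \<rho>], insert j1, auto)
    moreover have "marg_entropy d (2 * n) {2 * j - 1} \<rho> \<le> ln (real d)"
      by (rule single_bound[OF d _ \<rho>], insert j1, auto)
    ultimately show ?thesis unfolding markov_corr_def by simp
  qed
  have "(\<Sum>j\<in>J. S_step d n \<rho> j) \<le> (\<Sum>j\<in>J. 2 * ln (real d) - markov_corr d n \<rho> j)"
    by (rule sum_mono, rule trm)
  with N show ?thesis unfolding J_def by simp
qed

end
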